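(* Let $d\ge1$, $\lambda>0$, and let $f_0:\mathbb{R}^d\to[0,\infty)$ be a probability density such that: (i) $f_0$ is continuous and $\lim_{\|x\|\to\infty}f_0(x)=0$; (ii) there are constants $C,\bar\epsilon>0$ with $\int_{\{x:|f_0(x)-\lambda|\le\epsilon\}}f_0(x)\,dx\le C\epsilon$ for all $\epsilon\in(0,\bar\epsilon)$; (iii) for any $\lambda_l<\lambda_h$ in $[\lambda-\bar\epsilon,\lambda+\bar\epsilon]$ and $x,y\in S_{\lambda_h}$, if $x,y$ are disconnected in $S_{\lambda_h}$ then they are disconnected in $S_{\lambda_l}$, and if $x,y$ are connected in $S_{\lambda_l}$ then they are connected in $S_{\lambda_h}$. Let $\mathcal{X}_n=\{x_1,\dots,x_n\}$ be drawn independently from $f_0$ with $n\ge16$, and let $D=\binom n2^{-1}L$ with $L$ the Inactive/Active Binder loss with constants $0<a\le1$, $0<m\le1$, $a\le2m$. Then with probability at least $1-\frac{n+1}{n^2}$, for every $\epsilon\in(0,\bar\epsilon/2)$, $$\sup_{\delta\in[r_{n,\lambda,d},\,2h(\epsilon)]}\ \sup_{f:\|f-f_0\|_\infty\le\epsilon} D\{\tilde\psi_{\lambda,\delta}(f),\psi_\lambda(f_0)\}\le 8\Big(C\epsilon+\sqrt{\tfrac{\ln n}{n}}\Big),$$ where $r_{n,\lambda,d}=2\big(\frac{16\,d\ln n}{\lambda v_d n}\big)^{1/d}$ and $h(\eta)=\max\{h\ge0:\sup_{\|x-y\|\le h}|f_0(x)-f_0(y)|\le\eta\}$.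
   Context: $S_t=\{x\in\mathbb{R}^d:f_0(x)\ge t\}$; connectivity is topological. $v_d$ is the volume of the unit Euclidean ball in $\mathbb{R}^d$. A sub-partition of $\mathcal{X}_n$ is a collection of non-empty pairwise disjoint subsets of $\mathcal{X}_n$ (union possibly proper); its union is the active set, other points are inactive; its allocation vector $c$ has $c_i=h$ if $x_i\in C_h$, $c_i=0$ if inactive. $\psi_\lambda(f_0)$ is the sub-partition of $\mathcal{X}_n$ formed by the non-empty sets $W\cap\mathcal{X}_n$ with $W$ a connected component of $S_\lambda$. For $f:\mathbb{R}^d\to\mathbb{R}$ and $\delta>0$, $\tilde\psi_{\lambda,\delta}(f)$ is the sub-partition given by the graph-theoretic connected components of the graph with vertices $\{x\in\mathcal{X}_n:f(x)\ge\lambda\}$ and edges between $x,y$ with $\|x-y\|<\delta$. The Inactive/Active Binder loss between sub-partitions with active sets $A,A'$, inactive sets $I,I'$ and allocation vectors $c,c'$ is $L=(n-1)m(|A\cap I'|+|I\cap A'|)+\sum_{i<j,\,x_i,x_j\in A\cap A'}a[\mathbf 1(c_i=c_j,c'_i\ne c'_j)+\mathbf 1(c_i\ne c_j,c'_i=c'_j)]$. *)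

theory Defs
  imports "HOL-Probability.Probability"
begin

definition upper_set :: "('a \<Rightarrow> real) \<Rightarrow> real \<Rightarrow> 'a set" where
  "upper_set f t = {x. f x \<ge> t}"

text \<open>Sub-partitions of the sample are represented on the index set {..<n} (x_i = X i):
  a set of non-empty pairwise disjoint subsets of {..<n}.\<close>
definition is_subpartition :: "nat \<Rightarrow> nat set set \<Rightarrow> bool" where
  "is_subpartition n P \<longleftrightarrow> (\<forall>C\<in>P. C \<noteq> {} \<and> C \<subseteq> {..<n}) \<and>
     (\<forall>C\<in>P. \<forall>C'\<in>P. C \<noteq> C' \<longrightarrow> C \<inter> C' = {})"

definition active_set :: "nat set set \<Rightarrow> nat set" where
  "active_set P = \<Union>P"

definition inactive_set :: "nat \<Rightarrow> nat set set \<Rightarrow> nat set" where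
  "inactive_set n P = {..<n} - \<Union>P"

definition same_cluster :: "nat set set \<Rightarrow> nat \<Rightarrow> nat \<Rightarrow> bool" where
  "same_cluster P i j \<longleftrightarrow> (\<exists>C\<in>P. i \<in> C \<and> j \<in> C)"

definition psi_level :: "nat \<Rightarrow> (nat \<Rightarrow> 'a::real_normed_vector) \<Rightarrow> ('a \<Rightarrow> real) \<Rightarrow> real \<Rightarrow> nat set set" where
  "psi_level n X f0 lam =
     {{i. i < n \<and> X i \<in> W} | W. W \<in> components (upper_set f0 lam)} - {{}}"

definition graph_vertices :: "nat \<Rightarrow> (nat \<Rightarrow> 'a::real_normed_vector) \<Rightarrow> ('a \<Rightarrow> real) \<Rightarrow> real \<Rightarrow> nat set" where
  "graph_vertices n X f lam = {i. i < n \<and> f (X i) \<ge> lam}"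

definition graph_edges :: "nat \<Rightarrow> (nat \<Rightarrow> 'a::real_normed_vector) \<Rightarrow> ('a \<Rightarrow> real) \<Rightarrow> real \<Rightarrow> real \<Rightarrow> (nat \<times> nat) set" where
  "graph_edges n X f lam \<delta> =
     {(i, j). i \<in> graph_vertices n X f lam \<and> j \<in> graph_vertices n X f lam \<and> norm (X i - X j) < \<delta>}"

definition psi_graph :: "nat \<Rightarrow> (nat \<Rightarrow> 'a::real_normed_vector) \<Rightarrow> ('a \<Rightarrow> real) \<Rightarrow> real \<Rightarrow> real \<Rightarrow> nat set set" where
  "psi_graph n X f lam \<delta> =
     {{j. (i, j) \<in> (graph_edges n X f lam \<delta>)\<^sup>*} | i. i \<in> graph_vertices n X f lam}"

definition binder_loss :: "nat \<Rightarrow> real \<Rightarrow> real \<Rightarrow> nat set set \<Rightarrow> nat set set \<Rightarrow> real" where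
  "binder_loss n a m P P' =
     real (n - 1) * m * real (card (active_set P \<inter> inactive_set n P') + card (inactive_set n P \<inter> active_set P'))
     + (\<Sum>(i, j) \<in> {(i, j). i < j \<and> j < n \<and> i \<in> active_set P \<inter> active_set P' \<and> j \<in> active_set P \<inter> active_set P'}.
          a * ((if same_cluster P i j \<and> \<not> same_cluster P' i j then 1 else 0)
             + (if \<not> same_cluster P i j \<and> same_cluster P' i j then 1 else 0)))"

definition binder_D :: "nat \<Rightarrow> real \<Rightarrow> real \<Rightarrow> nat set set \<Rightarrow> nat set set \<Rightarrow> real" where
  "binder_D n a m P P' = binder_loss n a m P P' / real (n choose 2)"

text \<open>h(eta) = max{h >= 0 : sup_{||x-y|| <= h} |f0 x - f0 y| <= eta}, as an extended real
  (it equals the max when the max exists, and is infinity if the set is unbounded).\<close>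
definition h_mod :: "('a::real_normed_vector \<Rightarrow> real) \<Rightarrow> real \<Rightarrow> ereal" where
  "h_mod f0 \<eta> = Sup {ereal h | h. h \<ge> 0 \<and>
      (\<forall>x y. norm (x - y) \<le> h \<longrightarrow> \<bar>f0 x - f0 y\<bar> \<le> \<eta>)}"

definition r_rad :: "nat \<Rightarrow> real \<Rightarrow> nat \<Rightarrow> real \<Rightarrow> real" where
  "r_rad n lam d vd = 2 * (16 * real d * ln (real n) / (lam * vd * real n)) powr (1 / real d)"

end

theory Submission
  imports Defs
begin

lemma active_graph:
  "active_set (psi_graph n X f lam \<delta>) = graph_vertices n X f lam"
proof -
  have "j \<in> graph_vertices n X f lam" if "(i, j) \<in> (graph_edges n X f lam \<delta>)\<^sup>*"
      "i \<in> graph_vertices n X f lam" for i j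
    using that by (induction rule: rtrancl_induct) (auto simp: graph_edges_def)
  then show ?thesis
    unfolding active_set_def psi_graph_def by blast
qed

lemma same_graph_D:
  assumes "same_cluster (psi_graph n X f lam \<delta>) i j"
  shows "\<exists>v\<in>graph_vertices n X f lam. (v, i) \<in> (graph_edges n X f lam \<delta>)\<^sup>* \<and> (v, j) \<in> (graph_edges n X f lam \<delta>)\<^sup>*"
  using assms unfolding same_cluster_def psi_graph_def by blast

lemma same_graph_I:
  assumes "i \<in> graph_vertices n X f lam" "(i, j) \<in> (graph_edges n X f lam \<delta>)\<^sup>*"
  shows "same_cluster (psi_graph n X f lam \<delta>) i j"
  using assms unfolding same_cluster_def psi_graph_def by blast

lemma active_level:
  "active_set (psi_level n X f0 lam) = {i. i < n \<and> X i \<in> upper_set f0 lam}"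
proof -
  have "{i. i < n \<and> X i \<in> upper_set f0 lam} \<subseteq> active_set (psi_level n X f0 lam)"
  proof
    fix i assume i: "i \<in> {i. i < n \<and> X i \<in> upper_set f0 lam}"
    then have "connected_component_set (upper_set f0 lam) (X i) \<in> components (upper_set f0 lam)"
      by (auto simp: components_def)
    moreover have "X i \<in> connected_component_set (upper_set f0 lam) (X i)"
      using i by auto
    ultimately show "i \<in> active_set (psi_level n X f0 lam)"
      using i unfolding active_set_def psi_level_def by blast
  qed
  moreover have "active_set (psi_level n X f0 lam) \<subseteq> {i. i < n \<and> X i \<in> upper_set f0 lam}"
    unfolding active_set_def psi_level_def using in_components_subset by blast
  ultimately show ?thesis by blast
qed

lemma same_level_iff:
  "same_cluster (psi_level n X f0 lam) i j \<longleftrightarrow>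
     i < n \<and> j < n \<and> X i \<in> upper_set f0 lam \<and> connected_component (upper_set f0 lam) (X i) (X j)"
proof
  assume "same_cluster (psi_level n X f0 lam) i j"
  then obtain Cl where Cl: "Cl \<in> psi_level n X f0 lam" "i \<in> Cl" "j \<in> Cl"
    unfolding same_cluster_def by blast
  then obtain W where "W \<in> components (upper_set f0 lam)" "Cl = {k. k < n \<and> X k \<in> W}"
    unfolding psi_level_def by blast
  then have W: "W \<in> components (upper_set f0 lam)" "i < n" "j < n" "X i \<in> W" "X j \<in> W"
    using Cl by auto
  then obtain x where x: "x \<in> upper_set f0 lam" "W = connected_component_set (upper_set f0 lam) x"
    by (auto simp: components_def)
  then show "i < n \<and> j < n \<and> X i \<in> upper_set f0 lam \<and> connected_component (upper_set f0 lam) (X i) (X j)"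
  proof -
    have "connected_component (upper_set f0 lam) x (X i)" "connected_component (upper_set f0 lam) x (X j)"
      using W(4,5) unfolding x(2) by (simp_all add: mem_Collect_eq)
    then have "connected_component (upper_set f0 lam) (X i) (X j)"
      using connected_component_sym connected_component_trans by blast
    moreover have "X i \<in> upper_set f0 lam"
      using \<open>connected_component (upper_set f0 lam) x (X i)\<close> connected_component_in by blast
    ultimately show ?thesis using W by blast
  qed
next
  assume a: "i < n \<and> j < n \<and> X i \<in> upper_set f0 lam \<and> connected_component (upper_set f0 lam) (X i) (X j)"
  then have "connected_component_set (upper_set f0 lam) (X i) \<in> components (upper_set f0 lam)"
    by (auto simp: components_def)
  moreover have "X i \<in> connected_component_set (upper_set f0 lam) (X i)"
    using a by auto
  moreover have "X j \<in> connected_component_set (upper_set f0 lam) (X i)"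
    using a by auto
  ultimately have m: "i \<in> {k. k < n \<and> X k \<in> connected_component_set (upper_set f0 lam) (X i)}"
    "j \<in> {k. k < n \<and> X k \<in> connected_component_set (upper_set f0 lam) (X i)}"
    using a by blast+
  have "{k. k < n \<and> X k \<in> connected_component_set (upper_set f0 lam) (X i)} \<in> psi_level n X f0 lam"
    unfolding psi_level_def
  proof (rule DiffI)
    show "{k. k < n \<and> X k \<in> connected_component_set (upper_set f0 lam) (X i)}
        \<in> {{k. k < n \<and> X k \<in> W} |W. W \<in> components (upper_set f0 lam)}"
      using \<open>connected_component_set (upper_set f0 lam) (X i) \<in> components (upper_set f0 lam)\<close> by blast
    show "{k. k < n \<and> X k \<in> connected_component_set (upper_set f0 lam) (X i)} \<notin> {{}}"
      using m by blast
  qed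
  then show "same_cluster (psi_level n X f0 lam) i j"
    unfolding same_cluster_def using m by (intro bexI conjI)
qed

lemma segment_near_end:
  fixes a b z :: "'a::euclidean_space"
  assumes "z \<in> closed_segment a b"
  shows "norm (z - a) \<le> norm (b - a) / 2 \<or> norm (z - b) \<le> norm (b - a) / 2"
proof -
  obtain t where t: "0 \<le> t" "t \<le> 1" "z = (1 - t) *\<^sub>R a + t *\<^sub>R b"
    using assms by (auto simp: in_segment)
  have za: "z - a = t *\<^sub>R (b - a)" using t by (simp add: algebra_simps)
  have zb: "z - b = (1 - t) *\<^sub>R (a - b)" using t by (simp add: algebra_simps)
  have nab: "norm (a - b) = norm (b - a)" by (simp add: norm_minus_commute)
  show ?thesis
  proof (cases "t \<le> 1/2")
    case True
    then have "norm (z - a) = t * norm (b - a)" using za t by simp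
    also have "\<dots> \<le> norm (b - a) / 2" using True by (simp add: mult_right_mono[of t "1/2" "norm (b-a)", simplified])
    finally show ?thesis by simp
  next
    case False
    then have "norm (z - b) = (1 - t) * norm (b - a)" using zb t nab by simp
    also have "\<dots> \<le> norm (b - a) / 2" using False
      by (simp add: mult_right_mono[of "1 - t" "1/2" "norm (b-a)", simplified])
    finally show ?thesis by simp
  qed
qed

lemma edge_path_cc:
  fixes X :: "nat \<Rightarrow> 'a::euclidean_space"
  assumes hd: "\<And>x z. norm (x - z) < \<delta> / 2 \<Longrightarrow> \<bar>g x - g z\<bar> \<le> \<epsilon>"
    and hf: "\<And>x. \<bar>f x - g x\<bar> \<le> \<epsilon>"
    and path: "(u, w) \<in> (graph_edges n X f lam \<delta>)\<^sup>*"
    and u: "u \<in> graph_vertices n X f lam"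
  shows "connected_component (upper_set g (lam - 2 * \<epsilon>)) (X u) (X w)"
  using path
proof (induction rule: rtrancl_induct)
  case base
  have "0 \<le> \<epsilon>" using hf[of undefined] by linarith
  moreover have "f (X u) \<ge> lam" using u by (simp add: graph_vertices_def)
  ultimately have "X u \<in> upper_set g (lam - 2 * \<epsilon>)"
    using hf[of "X u"] by (simp add: upper_set_def)
  then show ?case by simp
next
  case (step y z)
  from step(2) have y: "f (X y) \<ge> lam" and z: "f (X z) \<ge> lam" and d: "norm (X y - X z) < \<delta>"
    by (auto simp: graph_edges_def graph_vertices_def)
  have "closed_segment (X y) (X z) \<subseteq> upper_set g (lam - 2 * \<epsilon>)"
  proof
    fix p assume p: "p \<in> closed_segment (X y) (X z)"
    have nd: "norm (X z - X y) < \<delta>" using d by (simp add: norm_minus_commute)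
    from segment_near_end[OF p] show "p \<in> upper_set g (lam - 2 * \<epsilon>)"
    proof
      assume "norm (p - X y) \<le> norm (X z - X y) / 2"
      then have "norm (p - X y) < \<delta> / 2" using nd by linarith
      then have "\<bar>g p - g (X y)\<bar> \<le> \<epsilon>" by (rule hd)
      then show ?thesis using hf[of "X y"] y by (simp add: upper_set_def)
    next
      assume "norm (p - X z) \<le> norm (X z - X y) / 2"
      then have "norm (p - X z) < \<delta> / 2" using nd by linarith
      then have "\<bar>g p - g (X z)\<bar> \<le> \<epsilon>" by (rule hd)
      then show ?thesis using hf[of "X z"] z by (simp add: upper_set_def)
    qed
  qed
  then have "connected_component (upper_set g (lam - 2 * \<epsilon>)) (X y) (X z)"
    by (intro connected_componentI[of "closed_segment (X y) (X z)"]) auto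
  then show ?case using step(3) connected_component_trans by blast
qed

lemma graph_edges_sym:
  "(k, l) \<in> graph_edges n X f lam \<delta> \<Longrightarrow> (l, k) \<in> graph_edges n X f lam \<delta>"
  by (auto simp: graph_edges_def norm_minus_commute)

lemma graph_rtrancl_sym:
  assumes "(k, l) \<in> (graph_edges n X f lam \<delta>)\<^sup>*"
  shows "(l, k) \<in> (graph_edges n X f lam \<delta>)\<^sup>*"
proof -
  have "(graph_edges n X f lam \<delta>)\<inverse> = graph_edges n X f lam \<delta>"
    by (auto intro: graph_edges_sym)
  moreover have "(l, k) \<in> ((graph_edges n X f lam \<delta>)\<inverse>)\<^sup>*"
    using assms by (simp add: rtrancl_converse)
  ultimately show ?thesis by simp
qed

lemma cover_connect:
  fixes X :: "nat \<Rightarrow> 'a::euclidean_space"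
  assumes hd: "\<And>x z. norm (x - z) < \<delta> / 2 \<Longrightarrow> \<bar>g x - g z\<bar> \<le> \<epsilon>"
    and hf: "\<And>x. \<bar>f x - g x\<bar> \<le> \<epsilon>"
    and r: "0 < r" "r \<le> \<delta>" and eta: "0 < \<eta>" "\<eta> < 1"
    and cov: "\<And>c. ball c (r / 2) \<subseteq> upper_set g lam \<Longrightarrow> \<exists>k<n. norm (X k - c) < (r / 2) * (1 - \<eta>)"
    and ij: "i < n" "j < n"
    and cc: "connected_component (upper_set g (lam + 2 * \<epsilon>)) (X i) (X j)"
  shows "(i, j) \<in> (graph_edges n X f lam \<delta>)\<^sup>*"
proof -
  define S2 where "S2 = upper_set g (lam + 2 * \<epsilon>)"
  define T where "T = connected_component_set S2 (X i)"
  define \<rho> where "\<rho> = (r / 2) * (1 - \<eta>)"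
  define E where "E = graph_edges n X f lam \<delta>"
  define R where "R = (\<lambda>p q. \<forall>k l. k < n \<and> norm (X k - p) < \<rho> \<and> l < n \<and> norm (X l - q) < \<rho> \<longrightarrow> (k, l) \<in> E\<^sup>*)"
  have eps0: "0 \<le> \<epsilon>" using hf[of undefined] by linarith
  have rho: "0 < \<rho>" "\<rho> < r / 2" using r eta by (auto simp: \<rho>_def)
  have TS: "T \<subseteq> S2" unfolding T_def by (rule connected_component_subset)
  have F1: "\<exists>k<n. norm (X k - p) < \<rho>" if "p \<in> S2" for p
  proof -
    have "ball p (r / 2) \<subseteq> upper_set g lam"
    proof
      fix y assume "y \<in> ball p (r / 2)"
      then have "norm (y - p) < \<delta> / 2" using r by (simp add: dist_norm norm_minus_commute)
      then have "\<bar>g y - g p\<bar> \<le> \<epsilon>" by (rule hd)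
      then show "y \<in> upper_set g lam" using that eps0 by (simp add: S2_def upper_set_def)
    qed
    then show ?thesis using cov unfolding \<rho>_def by blast
  qed
  have F2: "k \<in> graph_vertices n X f lam" if "p \<in> S2" "k < n" "norm (X k - p) < \<rho>" for p k
  proof -
    have "norm (X k - p) < \<delta> / 2" using that rho r by linarith
    then have "\<bar>g (X k) - g p\<bar> \<le> \<epsilon>" by (rule hd)
    then have "f (X k) \<ge> lam" using that(1) hf[of "X k"] by (simp add: S2_def upper_set_def)
    then show ?thesis using that by (simp add: graph_vertices_def)
  qed
  have "R (X i) (X j)"
  proof (rule connected_equivalence_relation[of T])
    show "connected T" unfolding T_def by (rule connected_connected_component)
    show "X i \<in> T" using cc connected_component_in unfolding T_def S2_def by auto
    show "X j \<in> T" using cc unfolding T_def S2_def by auto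
  next
    fix x y assume "R x y" "x \<in> T" "y \<in> T"
    then show "R y x" unfolding R_def E_def using graph_rtrancl_sym by blast
  next
    fix x y z assume xyz: "R x y" "R y z" "x \<in> T" "y \<in> T" "z \<in> T"
    show "R x z" unfolding R_def
    proof (intro allI impI)
      fix k l assume kl: "k < n \<and> norm (X k - x) < \<rho> \<and> l < n \<and> norm (X l - z) < \<rho>"
      obtain q where q: "q < n" "norm (X q - y) < \<rho>" using F1 xyz(4) TS by blast
      have "(k, q) \<in> E\<^sup>*" using xyz(1) kl q unfolding R_def by blast
      moreover have "(q, l) \<in> E\<^sup>*" using xyz(2) kl q unfolding R_def by blast
      ultimately show "(k, l) \<in> E\<^sup>*" by (rule rtrancl_trans)
    qed
  next
    fix p assume p: "p \<in> T"
    show "\<exists>U. openin (top_of_set T) U \<and> p \<in> U \<and> (\<forall>x\<in>U. R p x)"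
    proof (intro exI conjI)
      show "openin (top_of_set T) (T \<inter> ball p (\<eta> * r / 2))"
        by (intro openin_open_Int) auto
      show "p \<in> T \<inter> ball p (\<eta> * r / 2)" using p eta r by auto
      show "\<forall>x\<in>T \<inter> ball p (\<eta> * r / 2). R p x"
      proof
        fix q assume q: "q \<in> T \<inter> ball p (\<eta> * r / 2)"
        show "R p q" unfolding R_def
        proof (intro allI impI)
          fix k l assume kl: "k < n \<and> norm (X k - p) < \<rho> \<and> l < n \<and> norm (X l - q) < \<rho>"
          have pq: "norm (p - q) < \<eta> * r / 2" using q by (simp add: dist_norm)
          have "norm (X k - X l) \<le> norm ((X k - p) + (p - q)) + norm (q - X l)"
            using norm_triangle_ineq[of "(X k - p) + (p - q)" "q - X l"] by simp
          also have "\<dots> \<le> norm (X k - p) + norm (p - q) + norm (q - X l)"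
            using norm_triangle_ineq[of "X k - p" "p - q"] by simp
          also have "\<dots> < \<rho> + \<eta> * r / 2 + \<rho>"
            using kl pq by (simp add: norm_minus_commute add_strict_mono)
          also have "\<dots> = r - \<eta> * r / 2" unfolding \<rho>_def by (simp add: algebra_simps)
          also have "\<dots> < \<delta>" using r eta mult_pos_pos[of \<eta> r] by linarith
          finally have d: "norm (X k - X l) < \<delta>" .
          have "k \<in> graph_vertices n X f lam" using F2[of p k] kl p TS by blast
          moreover have "l \<in> graph_vertices n X f lam" using F2[of q l] kl q TS by blast
          ultimately have "(k, l) \<in> E" using d unfolding E_def graph_edges_def by simp
          then show "(k, l) \<in> E\<^sup>*" by simp
        qed
      qed
    qed
  qed
  then show ?thesis unfolding R_def E_def using ij rho by auto
qed

lemma real_choose_two: "real (n choose 2) = real n * (real n - 1) / 2"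
proof (cases n)
  case 0 then show ?thesis by simp
next
  case (Suc k)
  have "even (n * (n - 1))" by auto
  then have "real (n * (n - 1) div 2) = real (n * (n - 1)) / 2"
    by (simp add: real_of_nat_div)
  then show ?thesis using Suc by (simp add: choose_two algebra_simps)
qed

lemma pair_count:
  assumes "K \<subseteq> {..<n}"
  shows "card {(i, j). i < j \<and> j < (n::nat) \<and> (i \<in> K \<or> j \<in> K)} \<le> card K * (n - 1)"
proof -
  have fK: "finite K" using assms finite_subset by blast
  have sub: "{(i, j). i < j \<and> j < n \<and> (i \<in> K \<or> j \<in> K)} \<subseteq> (\<Union>k\<in>K. ({k} \<times> {k<..<n}) \<union> ({..<k} \<times> {k}))"
    by auto
  have "card {(i, j). i < j \<and> j < n \<and> (i \<in> K \<or> j \<in> K)} \<le> card (\<Union>k\<in>K. ({k} \<times> {k<..<n}) \<union> ({..<k} \<times> {k}))"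
    by (rule card_mono[OF _ sub]) (use fK in auto)
  also have "\<dots> \<le> (\<Sum>k\<in>K. card (({k} \<times> {k<..<n}) \<union> ({..<k} \<times> {k})))"
    by (rule card_UN_le[OF fK])
  also have "\<dots> \<le> (\<Sum>k\<in>K. (n - 1))"
  proof (rule sum_mono)
    fix k assume k: "k \<in> K"
    then have kn: "k < n" using assms by auto
    have "card (({k} \<times> {k<..<n}) \<union> ({..<k} \<times> {k})) \<le> card ({k} \<times> {k<..<n}) + card ({..<k} \<times> {k})"
      by (rule card_Un_le)
    also have "\<dots> = (n - Suc k) + k" by (simp add: card_cartesian_product)
    also have "\<dots> = n - 1" using kn by simp
    finally show "card (({k} \<times> {k<..<n}) \<union> ({..<k} \<times> {k})) \<le> n - 1" .
  qed
  also have "\<dots> = card K * (n - 1)" by simp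
  finally show ?thesis .
qed

lemma det_bound:
  fixes X :: "nat \<Rightarrow> 'a::euclidean_space" and f0 f :: "'a \<Rightarrow> real"
  assumes stable: "\<And>ll lh x y. lam - epsbar \<le> ll \<Longrightarrow> ll < lh \<Longrightarrow> lh \<le> lam + epsbar \<Longrightarrow>
        x \<in> upper_set f0 lh \<Longrightarrow> y \<in> upper_set f0 lh \<Longrightarrow>
        (\<not> connected_component (upper_set f0 lh) x y \<longrightarrow> \<not> connected_component (upper_set f0 ll) x y) \<and>
        (connected_component (upper_set f0 ll) x y \<longrightarrow> connected_component (upper_set f0 lh) x y)"
    and eps: "0 < \<epsilon>" "2 * \<epsilon> < epsbar"
    and hd: "\<And>x z. norm (x - z) < \<delta> / 2 \<Longrightarrow> \<bar>f0 x - f0 z\<bar> \<le> \<epsilon>"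
    and hf: "\<And>x. \<bar>f x - f0 x\<bar> \<le> \<epsilon>"
    and r: "0 < r" "r \<le> \<delta>" and eta: "0 < \<eta>" "\<eta> < 1"
    and cov: "\<And>c. ball c (r / 2) \<subseteq> upper_set f0 lam \<Longrightarrow> \<exists>k<n. norm (X k - c) < (r / 2) * (1 - \<eta>)"
    and am: "0 \<le> a" "a \<le> 1" "0 \<le> m" "m \<le> 1" and n2: "2 \<le> n"
  shows "binder_D n a m (psi_graph n X f lam \<delta>) (psi_level n X f0 lam)
          \<le> 4 * real (card {i. i < n \<and> \<bar>f0 (X i) - lam\<bar> \<le> 2 * \<epsilon>}) / real n"
proof -
  define P where "P = psi_graph n X f lam \<delta>"
  define P' where "P' = psi_level n X f0 lam"
  define V where "V = graph_vertices n X f lam"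
  define A' where "A' = {i. i < n \<and> X i \<in> upper_set f0 lam}"
  define Ks where "Ks = {i. i < n \<and> \<bar>f0 (X i) - lam\<bar> \<le> 2 * \<epsilon>}"
  define K2 where "K2 = {i. i < n \<and> lam \<le> f0 (X i) \<and> f0 (X i) < lam + 2 * \<epsilon>}"
  define E where "E = graph_edges n X f lam \<delta>"
  have actG: "active_set P = V" unfolding P_def V_def by (rule active_graph)
  have actL: "active_set P' = A'" unfolding P'_def A'_def by (rule active_level)
  have inG: "inactive_set n P = {..<n} - V" using actG by (simp add: inactive_set_def active_set_def)
  have inL: "inactive_set n P' = {..<n} - A'" using actL by (simp add: inactive_set_def active_set_def)
  have finKs: "finite Ks" unfolding Ks_def by simp
  have K2Ks: "K2 \<subseteq> Ks" unfolding K2_def Ks_def using eps by auto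
  have K2n: "K2 \<subseteq> {..<n}" unfolding K2_def by auto
  have Vn: "V \<subseteq> {..<n}" unfolding V_def graph_vertices_def by auto
  have c1: "card (V \<inter> ({..<n} - A')) + card (({..<n} - V) \<inter> A') \<le> card Ks"
  proof -
    have "card (V \<inter> ({..<n} - A')) + card (({..<n} - V) \<inter> A') = card ((V \<inter> ({..<n} - A')) \<union> (({..<n} - V) \<inter> A'))"
      by (rule card_Un_disjoint[symmetric]) auto
    also have "\<dots> \<le> card Ks"
    proof (rule card_mono[OF finKs])
      show "V \<inter> ({..<n} - A') \<union> ({..<n} - V) \<inter> A' \<subseteq> Ks"
      proof
        fix i assume i: "i \<in> V \<inter> ({..<n} - A') \<union> ({..<n} - V) \<inter> A'"
        have fi: "\<bar>f (X i) - f0 (X i)\<bar> \<le> \<epsilon>" by (rule hf)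
        from i show "i \<in> Ks"
        proof
          assume "i \<in> V \<inter> ({..<n} - A')"
          then have "i < n" "f (X i) \<ge> lam" "f0 (X i) < lam"
            by (auto simp: V_def A'_def graph_vertices_def upper_set_def)
          then show ?thesis using fi eps unfolding Ks_def by auto
        next
          assume "i \<in> ({..<n} - V) \<inter> A'"
          then have "i < n" "f (X i) < lam" "f0 (X i) \<ge> lam"
            by (auto simp: V_def A'_def graph_vertices_def upper_set_def)
          then show ?thesis using fi eps unfolding Ks_def by auto
        qed
      qed
    qed
    finally show ?thesis .
  qed
  define Pairs where "Pairs = {(i, j). i < j \<and> j < n \<and> i \<in> active_set P \<inter> active_set P' \<and> j \<in> active_set P \<inter> active_set P'}"
  define Q where "Q = {(i, j). i < j \<and> j < n \<and> (i \<in> K2 \<or> j \<in> K2)}"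
  have finPairs: "finite Pairs"
    by (rule finite_subset[of _ "{..<n} \<times> {..<n}"]) (auto simp: Pairs_def)
  have no1: "same_cluster P' i j" if ij: "i \<in> V" "j \<in> A'" "i \<in> A'" "same_cluster P i j" for i j
  proof -
    obtain v where v: "v \<in> V" "(v, i) \<in> E\<^sup>*" "(v, j) \<in> E\<^sup>*"
      using same_graph_D[OF ij(4)[unfolded P_def]] unfolding V_def E_def by blast
    have "connected_component (upper_set f0 (lam - 2 * \<epsilon>)) (X v) (X i)"
      by (rule edge_path_cc[where g=f0 and f=f and \<delta>=\<delta> and n=n, OF hd hf]) (use v in \<open>auto simp: E_def V_def\<close>)
    moreover have "connected_component (upper_set f0 (lam - 2 * \<epsilon>)) (X v) (X j)"
      by (rule edge_path_cc[where g=f0 and f=f and \<delta>=\<delta> and n=n, OF hd hf]) (use v in \<open>auto simp: E_def V_def\<close>)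
    ultimately have cc: "connected_component (upper_set f0 (lam - 2 * \<epsilon>)) (X i) (X j)"
      using connected_component_sym connected_component_trans by blast
    have "X i \<in> upper_set f0 lam" "X j \<in> upper_set f0 lam" "i < n" "j < n"
      using ij unfolding A'_def by auto
    moreover have "connected_component (upper_set f0 lam) (X i) (X j)"
      using stable[of "lam - 2 * \<epsilon>" lam "X i" "X j"] cc eps calculation by auto
    ultimately show ?thesis unfolding P'_def by (simp add: same_level_iff)
  qed
  have no2: "i \<in> K2 \<or> j \<in> K2" if ij: "i \<in> V" "j \<in> V" "i \<in> A'" "j \<in> A'" "\<not> same_cluster P i j" "same_cluster P' i j" for i j
  proof (rule ccontr)
    assume "\<not> (i \<in> K2 \<or> j \<in> K2)"
    then have hi: "f0 (X i) \<ge> lam + 2 * \<epsilon>" and hj: "f0 (X j) \<ge> lam + 2 * \<epsilon>" and ijn: "i < n" "j < n"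
      using ij(3,4) unfolding K2_def A'_def upper_set_def by auto
    have "connected_component (upper_set f0 lam) (X i) (X j)"
      using ij(6) unfolding P'_def by (simp add: same_level_iff)
    then have cc2: "connected_component (upper_set f0 (lam + 2 * \<epsilon>)) (X i) (X j)"
      using stable[of lam "lam + 2 * \<epsilon>" "X i" "X j"] hi hj eps by (auto simp: upper_set_def)
    have "(i, j) \<in> E\<^sup>*"
      unfolding E_def using cover_connect[where g=f0 and f=f and \<delta>=\<delta> and \<epsilon>=\<epsilon> and r=r and \<eta>=\<eta> and n=n and X=X and lam=lam, OF hd hf r eta cov ijn cc2] .
    then have "same_cluster P i j" unfolding P_def E_def using ij(1) same_graph_I unfolding V_def by blast
    then show False using ij(5) by blast
  qed
  have sum_le: "(\<Sum>(i, j)\<in>Pairs. a * ((if same_cluster P i j \<and> \<not> same_cluster P' i j then 1 else 0)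
             + (if \<not> same_cluster P i j \<and> same_cluster P' i j then 1 else 0)))
        \<le> (\<Sum>p\<in>Pairs. if p \<in> Q then a else 0)"
  proof (rule sum_mono)
    fix p assume p: "p \<in> Pairs"
    obtain i j where pij: "p = (i, j)" by (cases p)
    have ij: "i < j" "j < n" "i \<in> V" "j \<in> V" "i \<in> A'" "j \<in> A'"
      using p unfolding pij Pairs_def actG actL by auto
    have t1: "\<not> (same_cluster P i j \<and> \<not> same_cluster P' i j)" using no1[of i j] ij by blast
    show "(case p of (i, j) \<Rightarrow> a * ((if same_cluster P i j \<and> \<not> same_cluster P' i j then 1 else 0)
             + (if \<not> same_cluster P i j \<and> same_cluster P' i j then 1 else 0)))
          \<le> (if p \<in> Q then a else 0)"
    proof (cases "\<not> same_cluster P i j \<and> same_cluster P' i j")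
      case True
      then have "p \<in> Q" using no2[of i j] ij unfolding Q_def pij by auto
      then show ?thesis using t1 True unfolding pij by simp
    next
      case False
      then show ?thesis using t1 am unfolding pij
        by (cases "same_cluster P i j"; cases "same_cluster P' i j") auto
    qed
  qed
  also have "\<dots> = (\<Sum>p\<in>Pairs \<inter> Q. a)"
    using sum.inter_restrict[OF finPairs, of "\<lambda>_. a" Q] by simp
  also have "\<dots> = a * real (card (Pairs \<inter> Q))" by simp
  also have "\<dots> \<le> a * real (card Q)"
  proof -
    have "finite Q" by (rule finite_subset[of _ "{..<n} \<times> {..<n}"]) (auto simp: Q_def)
    then have "card (Pairs \<inter> Q) \<le> card Q" by (intro card_mono) auto
    then show ?thesis using am by (simp add: mult_left_mono)
  qed
  also have "\<dots> \<le> a * real (card K2 * (n - 1))"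
  proof -
    have "real (card Q) \<le> real (card K2 * (n - 1))"
      using pair_count[OF K2n] unfolding Q_def by linarith
    then show ?thesis using am(1) by (rule mult_left_mono)
  qed
  also have "\<dots> \<le> a * real (card Ks * (n - 1))"
  proof -
    have "card K2 \<le> card Ks" by (rule card_mono[OF finKs K2Ks])
    then have "card K2 * (n - 1) \<le> card Ks * (n - 1)" by (rule mult_right_mono) simp
    then have "real (card K2 * (n - 1)) \<le> real (card Ks * (n - 1))" by linarith
    then show ?thesis using am(1) by (rule mult_left_mono)
  qed
  finally have sum_le': "(\<Sum>(i, j)\<in>Pairs. a * ((if same_cluster P i j \<and> \<not> same_cluster P' i j then 1 else 0)
             + (if \<not> same_cluster P i j \<and> same_cluster P' i j then 1 else 0)))
        \<le> a * real (card Ks * (n - 1))" .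
  define k where "k = real (card Ks)"
  have k0: "0 \<le> k" unfolding k_def by simp
  have n1: "real (n - 1) = real n - 1" using n2 by (simp add: of_nat_diff)
  have L: "binder_loss n a m P P' \<le> 2 * (real n - 1) * k"
  proof -
    have "binder_loss n a m P P' = real (n - 1) * m * real (card (V \<inter> ({..<n} - A')) + card (({..<n} - V) \<inter> A'))
       + (\<Sum>(i, j)\<in>Pairs. a * ((if same_cluster P i j \<and> \<not> same_cluster P' i j then 1 else 0)
             + (if \<not> same_cluster P i j \<and> same_cluster P' i j then 1 else 0)))"
      unfolding binder_loss_def Pairs_def using actG actL inG inL by simp
    also have "\<dots> \<le> real (n - 1) * m * k + a * (k * (real n - 1))"
    proof (rule add_mono)
      have "real (card (V \<inter> ({..<n} - A')) + card (({..<n} - V) \<inter> A')) \<le> k"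
        using c1 unfolding k_def by linarith
      then show "real (n - 1) * m * real (card (V \<inter> ({..<n} - A')) + card (({..<n} - V) \<inter> A')) \<le> real (n - 1) * m * k"
        using am by (intro mult_left_mono) auto
      show "(\<Sum>(i, j)\<in>Pairs. a * ((if same_cluster P i j \<and> \<not> same_cluster P' i j then 1 else 0)
             + (if \<not> same_cluster P i j \<and> same_cluster P' i j then 1 else 0))) \<le> a * (k * (real n - 1))"
        using sum_le' n1 unfolding k_def by (simp add: of_nat_mult)
    qed
    also have "\<dots> = (m + a) * (real n - 1) * k" using n1 by (simp add: algebra_simps)
    also have "\<dots> \<le> 2 * (real n - 1) * k"
      using am n2 k0 by (intro mult_right_mono) auto
    finally show ?thesis .
  qed
  have "binder_D n a m P P' = binder_loss n a m P P' / (real n * (real n - 1) / 2)"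
    unfolding binder_D_def by (simp add: real_choose_two)
  also have "\<dots> \<le> 2 * (real n - 1) * k / (real n * (real n - 1) / 2)"
    using L n2 by (intro divide_right_mono) auto
  also have "\<dots> = 4 * k / real n" using n2 by (simp add: field_simps)
  finally show ?thesis unfolding P_def P'_def k_def Ks_def .
qed

context
  fixes f0 :: "'a::euclidean_space \<Rightarrow> real"
  assumes nonneg: "\<And>x. f0 x \<ge> 0"
    and dens_int: "integrable lborel f0" and dens_one: "integral\<^sup>L lborel f0 = 1"
begin

lemma f0_meas [measurable]: "f0 \<in> borel_measurable lborel"
  using dens_int by (rule borel_measurable_integrable)

lemma f0_meas_borel [measurable]: "f0 \<in> borel_measurable borel"
  using f0_meas by simp

lemma dens_prob: "prob_space (density lborel (\<lambda>x. ennreal (f0 x)))"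
proof
  have "emeasure (density lborel (\<lambda>x. ennreal (f0 x))) (space (density lborel (\<lambda>x. ennreal (f0 x))))
      = (\<integral>\<^sup>+ x. ennreal (f0 x) \<partial>lborel)"
    by (simp add: emeasure_density)
  also have "\<dots> = ennreal (integral\<^sup>L lborel f0)"
    by (rule nn_integral_eq_integral[OF dens_int]) (simp add: nonneg)
  finally show "emeasure (density lborel (\<lambda>x. ennreal (f0 x))) (space (density lborel (\<lambda>x. ennreal (f0 x)))) = 1"
    using dens_one by simp
qed

lemma dens_emeasure:
  assumes [measurable]: "A \<in> sets borel"
  shows "emeasure (density lborel (\<lambda>x. ennreal (f0 x))) A = (\<integral>\<^sup>+ x. ennreal (f0 x * indicator A x) \<partial>lborel)"
  by (subst emeasure_density) (auto intro!: nn_integral_cong simp: indicator_def)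

lemma dens_measure:
  assumes [measurable]: "A \<in> sets borel"
  shows "measure (density lborel (\<lambda>x. ennreal (f0 x))) A = (LINT x : A | lborel. f0 x)"
proof -
  have int: "integrable lborel (\<lambda>x. f0 x * indicator A x)"
  proof -
    have "integrable lborel (\<lambda>x. indicator A x *\<^sub>R f0 x)"
      by (rule integrable_mult_indicator) (use dens_int in auto)
    then show ?thesis by (simp add: mult.commute)
  qed
  have "emeasure (density lborel (\<lambda>x. ennreal (f0 x))) A = ennreal (integral\<^sup>L lborel (\<lambda>x. f0 x * indicator A x))"
    unfolding dens_emeasure[OF assms]
    by (rule nn_integral_eq_integral[OF int]) (simp add: nonneg)
  moreover have "integral\<^sup>L lborel (\<lambda>x. f0 x * indicator A x) \<ge> 0"
    by (rule integral_nonneg_AE) (simp add: nonneg)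
  ultimately have "measure (density lborel (\<lambda>x. ennreal (f0 x))) A = integral\<^sup>L lborel (\<lambda>x. f0 x * indicator A x)"
    by (simp add: measure_def)
  then show ?thesis by (simp add: set_lebesgue_integral_def mult.commute)
qed

lemma dens_ge_vol:
  assumes [measurable]: "B \<in> sets borel" and sub: "B \<subseteq> upper_set f0 lam" and lam: "lam \<ge> 0"
  shows "ennreal lam * emeasure lborel B \<le> emeasure (density lborel (\<lambda>x. ennreal (f0 x))) B"
proof -
  have "ennreal lam * emeasure lborel B = (\<integral>\<^sup>+ x. ennreal lam * indicator B x \<partial>lborel)"
    by (simp add: nn_integral_cmult_indicator)
  also have "\<dots> \<le> (\<integral>\<^sup>+ x. ennreal (f0 x * indicator B x) \<partial>lborel)"
  proof (rule nn_integral_mono)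
    fix x
    show "ennreal lam * indicator B x \<le> ennreal (f0 x * indicator B x)"
      using sub by (cases "x \<in> B") (auto simp: upper_set_def intro!: ennreal_leI)
  qed
  also have "\<dots> = emeasure (density lborel (\<lambda>x. ennreal (f0 x))) B"
    by (simp add: dens_emeasure)
  finally show ?thesis .
qed

lemma upper_closed:
  assumes "continuous_on UNIV f0"
  shows "closed (upper_set f0 lam)"
  unfolding upper_set_def by (rule closed_Collect_le[OF continuous_on_const assms])

lemma vol_upper:
  assumes cont: "continuous_on UNIV f0" and lam: "lam > 0"
  shows "lam * measure lborel (upper_set f0 lam) \<le> 1" and "emeasure lborel (upper_set f0 lam) < \<infinity>"
proof -
  have [measurable]: "upper_set f0 lam \<in> sets borel"
    using upper_closed[OF cont] by (simp add: borel_closed)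
  interpret prob_space "density lborel (\<lambda>x. ennreal (f0 x))" by (rule dens_prob)
  have "ennreal lam * emeasure lborel (upper_set f0 lam) \<le> emeasure (density lborel (\<lambda>x. ennreal (f0 x))) (upper_set f0 lam)"
    using lam by (intro dens_ge_vol) auto
  also have "\<dots> \<le> 1" by (rule emeasure_le_1)
  finally have *: "ennreal lam * emeasure lborel (upper_set f0 lam) \<le> 1" .
  then show fin: "emeasure lborel (upper_set f0 lam) < \<infinity>"
    using lam by (cases "emeasure lborel (upper_set f0 lam)") (auto simp: ennreal_mult_top top_unique)
  have "ennreal (lam * measure lborel (upper_set f0 lam)) = ennreal lam * emeasure lborel (upper_set f0 lam)"
    using fin lam by (simp add: emeasure_eq_ennreal_measure ennreal_mult)
  then show "lam * measure lborel (upper_set f0 lam) \<le> 1" using *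
    by (metis ennreal_le_1)
qed

end

lemma fpps:
  assumes "prob_space M"
  shows "finite_product_prob_space (\<lambda>_. M) {..<(n::nat)}"
proof -
  interpret product_prob_space "\<lambda>_. M" "{..<n}"
    using product_prob_spaceI[of "\<lambda>_. M"] assms by simp
  show ?thesis
    unfolding finite_product_prob_space_def finite_product_sigma_finite_def finite_product_sigma_finite_axioms_def
    using product_prob_space_axioms product_sigma_finite_axioms by simp
qed

lemma prob_none:
  assumes M: "prob_space M" and B: "B \<in> sets M"
  shows "measure (PiM {..<n} (\<lambda>_. M)) {X \<in> space (PiM {..<n} (\<lambda>_. M)). \<forall>i<n. X i \<notin> B}
          = (1 - measure M B) ^ n"
proof -
  interpret finite_product_prob_space "\<lambda>_. M" "{..<n}" by (rule fpps[OF M])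
  interpret M: prob_space M by fact
  have "{X \<in> space (PiM {..<n} (\<lambda>_. M)). \<forall>i<n. X i \<notin> B} = (\<Pi>\<^sub>E i\<in>{..<n}. space M - B)"
  proof (intro set_eqI iffI)
    fix X assume "X \<in> {X \<in> space (PiM {..<n} (\<lambda>_. M)). \<forall>i<n. X i \<notin> B}"
    then have "X \<in> (\<Pi>\<^sub>E i\<in>{..<n}. space M)" "\<forall>i<n. X i \<notin> B" by (simp_all add: space_PiM)
    then show "X \<in> (\<Pi>\<^sub>E i\<in>{..<n}. space M - B)" unfolding PiE_iff by simp
  next
    fix X assume "X \<in> (\<Pi>\<^sub>E i\<in>{..<n}. space M - B)"
    then have "X \<in> (\<Pi>\<^sub>E i\<in>{..<n}. space M)" "\<forall>i<n. X i \<notin> B" unfolding PiE_iff by simp_all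
    then show "X \<in> {X \<in> space (PiM {..<n} (\<lambda>_. M)). \<forall>i<n. X i \<notin> B}" by (simp add: space_PiM)
  qed
  then have "measure (PiM {..<n} (\<lambda>_. M)) {X \<in> space (PiM {..<n} (\<lambda>_. M)). \<forall>i<n. X i \<notin> B}
      = (\<Prod>i\<in>{..<n}. measure M (space M - B))"
    using prob_times[of "\<lambda>_. space M - B"] B by simp
  also have "\<dots> = (1 - measure M B) ^ n"
    using M.prob_compl[OF B] by simp
  finally show ?thesis .
qed

lemma indep_components:
  assumes M: "prob_space M" and False: "n \<noteq> 0"
  shows "prob_space.indep_vars (PiM {..<n} (\<lambda>_. M)) (\<lambda>_. M) (\<lambda>i X. X i) {..<(n::nat)}"
proof -
  interpret P: prob_space "PiM {..<n} (\<lambda>_. M)" by (rule prob_space_PiM) (use M in auto)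
  show ?thesis
  proof (subst P.indep_vars_iff_distr_eq_PiM')
    show "{..<n} \<noteq> {}" using False by auto
    show "(\<lambda>X. X i) \<in> measurable (PiM {..<n} (\<lambda>_. M)) M" if "i \<in> {..<n}" for i
      by (rule measurable_component_singleton) (use that in auto)
    have "distr (PiM {..<n} (\<lambda>_. M)) (PiM {..<n} (\<lambda>_. M)) (\<lambda>x. \<lambda>i\<in>{..<n}. x i)
        = distr (PiM {..<n} (\<lambda>_. M)) (PiM {..<n} (\<lambda>_. M)) (\<lambda>x. x)"
      by (rule distr_cong) (auto simp: space_PiM PiE_def extensional_def restrict_def)
    also have "\<dots> = PiM {..<n} (\<lambda>_. M)" by simp
    also have "\<dots> = PiM {..<n} (\<lambda>i. distr (PiM {..<n} (\<lambda>_. M)) M (\<lambda>X. X i))"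
      by (rule PiM_cong) (auto intro!: distr_PiM_component[symmetric] M)
    finally show "distr (PiM {..<n} (\<lambda>_. M)) (PiM {..<n} (\<lambda>_. M)) (\<lambda>x. \<lambda>i\<in>{..<n}. x i)
        = PiM {..<n} (\<lambda>i. distr (PiM {..<n} (\<lambda>_. M)) M (\<lambda>X. X i))" .
  qed
qed

lemma hoeff_count:
  assumes M: "prob_space M" and A: "A \<in> sets M" and n: "n > 0" and s: "s \<ge> 0"
  shows "measure (PiM {..<n} (\<lambda>_. M)) {X \<in> space (PiM {..<n} (\<lambda>_. M)).
            real n * measure M A + real n * s \<le> real (card {i. i < n \<and> X i \<in> A})}
         \<le> exp (- 2 * real n * s\<^sup>2)"
proof -
  interpret P: prob_space "PiM {..<n} (\<lambda>_. M)" by (rule prob_space_PiM) (use M in auto)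
  interpret M: prob_space M by fact
  define Y where "Y = (\<lambda>i (X :: nat \<Rightarrow> _). indicator A (X i) :: real)"
  have indY: "P.indep_vars (\<lambda>_. borel) Y {..<n}"
    unfolding Y_def
    by (rule P.indep_vars_compose2[OF indep_components[OF M, of n]]) (use A n in auto)
  have expY: "P.expectation (Y i) = measure M A" if "i < n" for i
  proof -
    have "P.expectation (Y i) = integral\<^sup>L (distr (PiM {..<n} (\<lambda>_. M)) M (\<lambda>X. X i)) (indicator A)"
      unfolding Y_def using that A by (subst integral_distr) auto
    also have "distr (PiM {..<n} (\<lambda>_. M)) M (\<lambda>X. X i) = M"
      by (rule distr_PiM_component) (use M that in auto)
    also have "integral\<^sup>L M (indicator A) = measure M A"
      using A by (simp add: Int_absorb2 sets.sets_into_space)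
    finally show ?thesis .
  qed
  interpret H: Hoeffding_ineq "PiM {..<n} (\<lambda>_. M)" "{..<n}" Y "\<lambda>_. 0" "\<lambda>_. 1" "\<Sum>i<n. P.expectation (Y i)"
  proof unfold_locales
    show "finite {..<n}" by simp
    show "P.indep_vars (\<lambda>_. borel) Y {..<n}" by (rule indY)
    fix i assume "i \<in> {..<n}"
    show "AE x in PiM {..<n} (\<lambda>_. M). Y i x \<in> {0..1}"
      by (intro AE_I2) (simp add: Y_def indicator_def)
  qed
  have mu: "(\<Sum>i<n. P.expectation (Y i)) = real n * measure M A"
    using expY by simp
  have sumY: "(\<Sum>i<n. Y i X) = real (card {i. i < n \<and> X i \<in> A})" for X
  proof -
    have "(\<Sum>i<n. Y i X) = (\<Sum>i\<in>{..<n}. indicator {i. X i \<in> A} i)"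
      unfolding Y_def by (intro sum.cong) (auto simp: indicator_def)
    also have "\<dots> = real (card ({..<n} \<inter> {i. X i \<in> A}))"
    proof -
      have "(\<Sum>i\<in>{..<n}. indicator {i. X i \<in> A} i) = (\<Sum>i\<in>{..<n}. if i \<in> {i. X i \<in> A} then (1::real) else 0)"
        by (intro sum.cong) (auto simp: indicator_def)
      also have "\<dots> = (\<Sum>i\<in>{..<n} \<inter> {i. X i \<in> A}. 1)"
        by (simp only: sum.inter_restrict[OF finite_lessThan])
      also have "\<dots> = real (card ({..<n} \<inter> {i. X i \<in> A}))" by simp
      finally show ?thesis .
    qed
    also have "{..<n} \<inter> {i. X i \<in> A} = {i. i < n \<and> X i \<in> A}" by auto
    finally show ?thesis .
  qed
  have "P.prob {X \<in> space (PiM {..<n} (\<lambda>_. M)). (\<Sum>i\<in>{..<n}. Y i X) \<ge> (\<Sum>i<n. P.expectation (Y i)) + real n * s}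
      \<le> exp (- 2 * (real n * s)\<^sup>2 / (\<Sum>i\<in>{..<n}. (1 - 0)\<^sup>2))"
    by (rule H.Hoeffding_ineq_ge) (use n s in auto)
  also have "\<dots> = exp (- 2 * real n * s\<^sup>2)"
    using n by (simp add: power2_eq_square)
  finally show ?thesis unfolding mu sumY by simp
qed

lemma maximal_net:
  fixes T :: "'a::metric_space set" and s :: real and B :: nat
  assumes bound: "\<And>F. finite F \<Longrightarrow> F \<subseteq> T \<Longrightarrow> (\<forall>x\<in>F. \<forall>y\<in>F. x \<noteq> y \<longrightarrow> s \<le> dist x y) \<Longrightarrow> card F \<le> B"
    and s: "s > 0"
  shows "\<exists>F. finite F \<and> F \<subseteq> T \<and> (\<forall>x\<in>F. \<forall>y\<in>F. x \<noteq> y \<longrightarrow> s \<le> dist x y) \<and> (\<forall>c\<in>T. \<exists>c'\<in>F. dist c c' < s)"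
proof -
  define P where "P = (\<lambda>k. \<exists>F. finite F \<and> F \<subseteq> T \<and> (\<forall>x\<in>F. \<forall>y\<in>F. x \<noteq> y \<longrightarrow> s \<le> dist x y) \<and> card F = k)"
  have P0: "P 0" unfolding P_def by (intro exI[of _ "{}"]) auto
  have PB: "\<forall>y. P y \<longrightarrow> y \<le> B" unfolding P_def using bound by blast
  obtain k where k: "P k" "\<forall>y. P y \<longrightarrow> y \<le> k"
    using Nat.ex_has_greatest_nat[OF P0 PB] by blast
  then obtain F where F: "finite F" "F \<subseteq> T" "\<forall>x\<in>F. \<forall>y\<in>F. x \<noteq> y \<longrightarrow> s \<le> dist x y" "card F = k"
    unfolding P_def by blast
  have "\<forall>c\<in>T. \<exists>c'\<in>F. dist c c' < s"
  proof (rule ccontr)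
    assume "\<not> (\<forall>c\<in>T. \<exists>c'\<in>F. dist c c' < s)"
    then obtain c where c: "c \<in> T" "\<forall>c'\<in>F. s \<le> dist c c'" by (auto simp: not_less)
    have cF: "c \<notin> F" using c(2) s by force
    have "P (Suc k)" unfolding P_def
    proof (intro exI conjI)
      show "finite (insert c F)" using F by simp
      show "insert c F \<subseteq> T" using F c by simp
      show "\<forall>x\<in>insert c F. \<forall>y\<in>insert c F. x \<noteq> y \<longrightarrow> s \<le> dist x y"
        using F(3) c(2) by (auto simp: dist_commute)
      show "card (insert c F) = Suc k" using F cF by simp
    qed
    then show False using k(2) by fastforce
  qed
  then show ?thesis using F by blast
qed

lemma net_card:
  fixes F :: "'a::euclidean_space set"
  assumes F: "finite F" "F \<subseteq> {c. ball c R \<subseteq> S}" and sep: "\<forall>x\<in>F. \<forall>y\<in>F. x \<noteq> y \<longrightarrow> s \<le> dist x y"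
    and s: "0 < s" "s / 2 \<le> R" and S: "S \<in> sets borel" "emeasure lborel S < \<infinity>"
  shows "real (card F) * ((s / 2) ^ DIM('a) * measure lborel (ball (0::'a) 1)) \<le> measure lborel S"
proof -
  have disj: "disjoint_family_on (\<lambda>x. ball x (s / 2)) F"
  unfolding disjoint_family_on_def
  proof (intro ballI impI)
    fix x y assume xy: "x \<in> F" "y \<in> F" "x \<noteq> y"
    show "ball x (s / 2) \<inter> ball y (s / 2) = {}"
    proof (rule ccontr)
      assume "ball x (s / 2) \<inter> ball y (s / 2) \<noteq> {}"
      then obtain z where "dist x z < s / 2" "dist y z < s / 2" by auto
      then have "dist x y < s" using dist_triangle_half_l by blast
      then show False using sep xy by force
    qed
  qed
  have "measure lborel (\<Union>x\<in>F. ball x (s / 2)) = (\<Sum>x\<in>F. measure lborel (ball x (s / 2)))"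
  proof (rule measure_finite_Union[OF F(1) _ disj])
    show "(\<lambda>x. ball x (s / 2)) ` F \<subseteq> sets lborel" by auto
    fix x :: 'a show "emeasure lborel (ball x (s / 2)) \<noteq> \<infinity>"
      using emeasure_lborel_ball_finite[of x "s / 2"] by simp
  qed
  also have "\<dots> = (\<Sum>x\<in>F. (s / 2) ^ DIM('a) * measure lborel (ball (0::'a) 1))"
    using s by (intro sum.cong refl content_ball_conv_unit_ball) simp
  also have "\<dots> = real (card F) * ((s / 2) ^ DIM('a) * measure lborel (ball (0::'a) 1))"
    by simp
  finally have eq: "measure lborel (\<Union>x\<in>F. ball x (s / 2)) = real (card F) * ((s / 2) ^ DIM('a) * measure lborel (ball (0::'a) 1))" .
  have sub: "(\<Union>x\<in>F. ball x (s / 2)) \<subseteq> S"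
  proof
    fix z assume "z \<in> (\<Union>x\<in>F. ball x (s / 2))"
    then obtain x where x: "x \<in> F" "z \<in> ball x (s / 2)" by blast
    then have "z \<in> ball x R" using s by auto
    then show "z \<in> S" using F(2) x by blast
  qed
  have "measure lborel (\<Union>x\<in>F. ball x (s / 2)) \<le> measure lborel S"
    by (rule measure_mono_fmeasurable[OF sub]) (use S F(1) in \<open>auto simp: fmeasurable_def intro!: borel_open open_UN\<close>)
  then show ?thesis using eq by simp
qed

lemma ln_ge1: "3 \<le> n \<Longrightarrow> 1 \<le> ln (real n)"
proof -
  assume n: "3 \<le> n"
  have "exp 1 \<le> real n" using exp_le n by linarith
  then have "ln (exp 1) \<le> ln (real n)" using n by (subst ln_le_cancel_iff) auto
  then show ?thesis by simp
qed

lemma r_facts: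
  assumes n: "16 \<le> n" and lam: "0 < lam" and vd: "0 < vd" and d: "1 \<le> d"
  shows "0 < r_rad n lam d vd" and "lam * vd * (r_rad n lam d vd / 2) ^ d = 16 * real d * ln (real n) / real n"
proof -
  define L0 where "L0 = 16 * real d * ln (real n) / (lam * vd * real n)"
  have ln: "1 \<le> ln (real n)" using ln_ge1[of n] n by simp
  have L0: "0 < L0" unfolding L0_def using lam vd d n ln by (intro divide_pos_pos mult_pos_pos) auto
  have r: "r_rad n lam d vd = 2 * L0 powr (1 / real d)" unfolding r_rad_def L0_def by simp
  show "0 < r_rad n lam d vd" unfolding r using L0 by simp
  have "(L0 powr (1 / real d)) ^ d = (L0 powr (1 / real d)) powr real d"
    using L0 by (simp add: powr_realpow)
  also have "\<dots> = L0" using d L0 by (simp add: powr_powr)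
  finally have "(r_rad n lam d vd / 2) ^ d = L0" unfolding r by simp
  then show "lam * vd * (r_rad n lam d vd / 2) ^ d = 16 * real d * ln (real n) / real n"
    unfolding L0_def using lam vd n by (simp add: field_simps)
qed

lemma bern_half:
  assumes d: "1 \<le> d"
  shows "1 / 2 \<le> (1 - 1 / (2 * real d)) ^ d"
proof -
  have "1 + real d * (- 1 / (2 * real d)) \<le> (1 + (- 1 / (2 * real d))) ^ d"
    by (rule Bernoulli_inequality) (use d in \<open>auto simp: field_simps\<close>)
  then show ?thesis using d by simp
qed

lemma exp_neg_ln_pow:
  assumes "0 < n"
  shows "exp (- (real k * ln (real n))) = 1 / real n ^ k"
proof -
  have "exp (real k * ln (real n)) = exp (ln (real n)) ^ k" by (rule exp_of_nat_mult)
  also have "\<dots> = real n ^ k" using assms by simp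
  finally show ?thesis by (simp add: exp_minus field_simps)
qed

lemma ball_num:
  assumes n: "16 \<le> n" and d: "1 \<le> d" and big: "16 * real d * ln (real n) \<le> real n"
    and cF: "real c \<le> real n * (8 * real d) ^ d / (16 * real d * ln (real n))"
  shows "real c * (1 / real n ^ (8 * d)) \<le> 1 / real n ^ 2"
proof -
  have ln: "1 \<le> ln (real n)" using ln_ge1[of n] n by simp
  have pos: "0 < 16 * real d * ln (real n)" using d ln by auto
  have "16 * real d * 1 \<le> 16 * real d * ln (real n)" by (rule mult_left_mono[OF ln]) simp
  then have "16 * real d \<le> real n" using big by linarith
  then have dn: "8 * real d \<le> real n" by linarith
  have "(8 * real d) ^ d \<le> real n ^ d" by (rule power_mono[OF dn]) simp
  then have "real n ^ 3 * (8 * real d) ^ d \<le> real n ^ 3 * real n ^ d" by (simp add: mult_left_mono)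
  also have "\<dots> = real n ^ (3 + d)" by (simp add: power_add)
  also have "\<dots> \<le> real n ^ (8 * d)" by (rule power_increasing) (use d n in auto)
  also have "\<dots> \<le> 16 * real d * ln (real n) * real n ^ (8 * d)"
  proof -
    have "1 \<le> 16 * real d * ln (real n)"
    proof -
      have "1 \<le> 16 * real d" using d by simp
      also have "\<dots> = 16 * real d * 1" by simp
      also have "\<dots> \<le> 16 * real d * ln (real n)" by (rule mult_left_mono[OF ln]) simp
      finally show ?thesis .
    qed
    then show ?thesis using mult_right_mono[of 1 "16 * real d * ln (real n)" "real n ^ (8 * d)"] by simp
  qed
  finally have key: "real n ^ 3 * (8 * real d) ^ d \<le> 16 * real d * ln (real n) * real n ^ (8 * d)" .
  have np: "0 < real n" using n by simp
  have "real c * (1 / real n ^ (8 * d)) \<le> real n * (8 * real d) ^ d / (16 * real d * ln (real n)) * (1 / real n ^ (8 * d))"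
    using cF by (intro mult_right_mono) auto
  also have "\<dots> = (real n ^ 3 * (8 * real d) ^ d / (16 * real d * ln (real n) * real n ^ (8 * d))) / real n ^ 2"
    using np pos by (simp add: field_simps power2_eq_square power3_eq_cube)
  also have "\<dots> \<le> 1 / real n ^ 2"
  proof (rule divide_right_mono)
    have "0 < 16 * real d * ln (real n) * real n ^ (8 * d)" using pos np by simp
    then show "real n ^ 3 * (8 * real d) ^ d / (16 * real d * ln (real n) * real n ^ (8 * d)) \<le> 1"
      using key by simp
  qed simp
  finally show ?thesis .
qed

lemma count_meas:
  fixes n :: nat
  assumes A: "A \<in> sets M"
  shows "(\<lambda>X. real (card {i. i < n \<and> X i \<in> A})) \<in> borel_measurable (PiM {..<n} (\<lambda>_. M))"
proof -
  have eq: "(\<lambda>X. real (card {i. i < n \<and> X i \<in> A})) = (\<lambda>X. \<Sum>i<n. indicator A (X i))"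
  proof
    fix X :: "nat \<Rightarrow> 'a"
    have "(\<Sum>i<n. indicator A (X i)) = (\<Sum>i\<in>{..<n}. if i \<in> {i. X i \<in> A} then (1::real) else 0)"
      by (intro sum.cong) (auto simp: indicator_def)
    also have "\<dots> = (\<Sum>i\<in>{..<n} \<inter> {i. X i \<in> A}. 1)"
      by (simp only: sum.inter_restrict[OF finite_lessThan])
    also have "\<dots> = real (card ({..<n} \<inter> {i. X i \<in> A}))" by simp
    also have "{..<n} \<inter> {i. X i \<in> A} = {i. i < n \<and> X i \<in> A}" by auto
    finally show "real (card {i. i < n \<and> X i \<in> A}) = (\<Sum>i<n. indicator A (X i))" by simp
  qed
  show ?thesis unfolding eq
  proof (rule borel_measurable_sum)
    fix i assume "i \<in> {..<n}"
    then show "(\<lambda>X. indicator A (X i) :: real) \<in> borel_measurable (PiM {..<n} (\<lambda>_. M))"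
      using A by measurable
  qed
qed

lemma none_meas:
  fixes n :: nat
  assumes A: "A \<in> sets M"
  shows "{X \<in> space (PiM {..<n} (\<lambda>_. M)). \<forall>i<n. X i \<notin> A} \<in> sets (PiM {..<n} (\<lambda>_. M))"
proof -
  have "{X \<in> space (PiM {..<n} (\<lambda>_. M)). \<forall>i<n. X i \<notin> A}
      = {X \<in> space (PiM {..<n} (\<lambda>_. M)). real (card {i. i < n \<and> X i \<in> A}) \<le> 0}"
    by auto
  also have "\<dots> \<in> sets (PiM {..<n} (\<lambda>_. M))"
    using count_meas[OF A, of n] by measurable
  finally show ?thesis .
qed

lemma margin_open:
  fixes f0 :: "'a::euclidean_space \<Rightarrow> real"
  assumes nonneg: "\<And>x. f0 x \<ge> 0"
    and dens_int: "integrable lborel f0" and dens_one: "integral\<^sup>L lborel f0 = 1"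
    and epsbar: "0 < epsbar"
    and margin: "\<And>\<epsilon>. 0 < \<epsilon> \<Longrightarrow> \<epsilon> < epsbar \<Longrightarrow>
        (LINT x : {x. \<bar>f0 x - lam\<bar> \<le> \<epsilon>} | lborel. f0 x) \<le> C * \<epsilon>"
    and C: "0 \<le> C"
  shows "measure (density lborel (\<lambda>x. ennreal (f0 x))) {x. \<bar>f0 x - lam\<bar> < epsbar} \<le> C * epsbar"
proof -
  let ?M = "density lborel (\<lambda>x. ennreal (f0 x))"
  interpret M: prob_space ?M by (rule dens_prob[OF nonneg dens_int dens_one])
  have fm[measurable]: "f0 \<in> borel_measurable borel" by (rule f0_meas_borel[OF nonneg dens_int dens_one])
  define A where "A = (\<lambda>k::nat. {x. \<bar>f0 x - lam\<bar> \<le> epsbar * (1 - 1 / real (k + 2))})"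
  have Asets: "A k \<in> sets borel" for k unfolding A_def by measurable
  have inc: "incseq A"
  proof (rule incseq_SucI)
    fix k
    have "1 / real (Suc k + 2) \<le> 1 / real (k + 2)" by (simp add: frac_le)
    then have "epsbar * (1 - 1 / real (k + 2)) \<le> epsbar * (1 - 1 / real (Suc k + 2))"
      using epsbar by (intro mult_left_mono) auto
    then show "A k \<subseteq> A (Suc k)" unfolding A_def by auto
  qed
  have U: "(\<Union>k. A k) = {x. \<bar>f0 x - lam\<bar> < epsbar}"
  proof
    show "(\<Union>k. A k) \<subseteq> {x. \<bar>f0 x - lam\<bar> < epsbar}"
    proof
      fix x assume "x \<in> (\<Union>k. A k)"
      then obtain k where "\<bar>f0 x - lam\<bar> \<le> epsbar * (1 - 1 / real (k + 2))" unfolding A_def by auto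
      moreover have "epsbar * (1 - 1 / real (k + 2)) < epsbar" using epsbar by simp
      ultimately show "x \<in> {x. \<bar>f0 x - lam\<bar> < epsbar}" by simp
    qed
    show "{x. \<bar>f0 x - lam\<bar> < epsbar} \<subseteq> (\<Union>k. A k)"
    proof
      fix x assume x: "x \<in> {x. \<bar>f0 x - lam\<bar> < epsbar}"
      define v where "v = \<bar>f0 x - lam\<bar>"
      have v: "0 \<le> v" "v < epsbar" using x by (auto simp: v_def)
      obtain k where k: "inverse (real (Suc k)) < (epsbar - v) / epsbar"
        using reals_Archimedean[of "(epsbar - v) / epsbar"] v epsbar by auto
      have "1 / real (k + 2) \<le> inverse (real (Suc k))" by (simp add: inverse_eq_divide frac_le)
      then have "1 / real (k + 2) < (epsbar - v) / epsbar" using k by linarith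
      then have "epsbar * (1 / real (k + 2)) < epsbar - v" using epsbar by (simp add: field_simps)
      then have "v \<le> epsbar * (1 - 1 / real (k + 2))" by (simp add: algebra_simps)
      then show "x \<in> (\<Union>k. A k)" unfolding A_def v_def by auto
    qed
  qed
  have lim: "(\<lambda>k. measure ?M (A k)) \<longlonglongrightarrow> measure ?M (\<Union>k. A k)"
    by (rule Lim_measure_incseq) (use Asets inc in auto)
  have bnd: "measure ?M (A k) \<le> C * epsbar" for k
  proof -
    have t: "0 < epsbar * (1 - 1 / real (k + 2))" "epsbar * (1 - 1 / real (k + 2)) < epsbar"
    proof -
      have "0 < 1 - 1 / real (k + 2)" by (simp add: field_simps)
      moreover have "1 - 1 / real (k + 2) < 1" by simp
      ultimately show "0 < epsbar * (1 - 1 / real (k + 2))" "epsbar * (1 - 1 / real (k + 2)) < epsbar"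
        using epsbar by (auto simp: mult_less_cancel_left1)
    qed
    have "measure ?M (A k) = (LINT x : A k | lborel. f0 x)"
      by (rule dens_measure[OF nonneg dens_int dens_one Asets])
    also have "\<dots> \<le> C * (epsbar * (1 - 1 / real (k + 2)))"
      unfolding A_def by (rule margin[OF t])
    also have "\<dots> \<le> C * epsbar" using t C by (intro mult_left_mono) auto
    finally show ?thesis .
  qed
  have "measure ?M (\<Union>k. A k) \<le> C * epsbar"
    by (rule LIMSEQ_le_const2[OF lim]) (use bnd in auto)
  then show ?thesis unfolding U .
qed

theorem theoremS1:
  fixes f0 :: "'a::euclidean_space \<Rightarrow> real"
    and lam C epsbar a m :: real and n :: nat
  assumes nonneg: "\<And>x. f0 x \<ge> 0"
    and dens_int: "integrable lborel f0" and dens_one: "integral\<^sup>L lborel f0 = 1"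
    and cont: "continuous_on UNIV f0"
    and vanish: "(f0 \<longlongrightarrow> 0) at_infinity"
    and lam_pos: "lam > 0"
    and C_pos: "C > 0" and epsbar_pos: "epsbar > 0"
    and margin: "\<And>\<epsilon>. 0 < \<epsilon> \<Longrightarrow> \<epsilon> < epsbar \<Longrightarrow>
        (LINT x : {x. \<bar>f0 x - lam\<bar> \<le> \<epsilon>} | lborel. f0 x) \<le> C * \<epsilon>"
    and stable: "\<And>ll lh x y. lam - epsbar \<le> ll \<Longrightarrow> ll < lh \<Longrightarrow> lh \<le> lam + epsbar \<Longrightarrow>
        x \<in> upper_set f0 lh \<Longrightarrow> y \<in> upper_set f0 lh \<Longrightarrow>
        (\<not> connected_component (upper_set f0 lh) x y \<longrightarrow> \<not> connected_component (upper_set f0 ll) x y) \<and>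
        (connected_component (upper_set f0 ll) x y \<longrightarrow> connected_component (upper_set f0 lh) x y)"
    and n_ge: "n \<ge> 16"
    and a_pos: "0 < a" and a_le: "a \<le> 1" and m_pos: "0 < m" and m_le: "m \<le> 1" and am: "a \<le> 2 * m"
  shows "\<exists>E \<in> sets (PiM {..<n} (\<lambda>_. density lborel (\<lambda>x. ennreal (f0 x)))).
     measure (PiM {..<n} (\<lambda>_. density lborel (\<lambda>x. ennreal (f0 x)))) E \<ge> 1 - real (n + 1) / real n ^ 2 \<and>
     (\<forall>X \<in> E. \<forall>\<epsilon>. 0 < \<epsilon> \<and> \<epsilon> < epsbar / 2 \<longrightarrow>
        (\<forall>\<delta> (f :: 'a \<Rightarrow> real).
           r_rad n lam DIM('a) (measure lborel (ball (0::'a) 1)) \<le> \<delta> \<and> ereal \<delta> \<le> 2 * h_mod f0 \<epsilon> \<and>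
           (\<forall>x. \<bar>f x - f0 x\<bar> \<le> \<epsilon>) \<longrightarrow>
           binder_D n a m (psi_graph n X f lam \<delta>) (psi_level n X f0 lam)
             \<le> 8 * (C * \<epsilon> + sqrt (ln (real n) / real n))))"
proof -
  define M where "M = density lborel (\<lambda>x. ennreal (f0 x))"
  define PM where "PM = PiM {..<n} (\<lambda>_. M)"
  have probM: "prob_space M" unfolding M_def by (rule dens_prob[OF nonneg dens_int dens_one])
  interpret M: prob_space M by (rule probM)
  interpret P: prob_space PM unfolding PM_def by (rule prob_space_PiM) (use probM in auto)
  have setsM: "sets M = sets borel" unfolding M_def by simp
  have f0m[measurable]: "f0 \<in> borel_measurable borel" by (rule f0_meas_borel[OF nonneg dens_int dens_one])
  define d where "d = DIM('a)"
  define vd where "vd = measure lborel (ball (0::'a) 1)"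
  define r where "r = r_rad n lam d vd"
  define S where "S = upper_set f0 lam"
  have d1: "1 \<le> d" unfolding d_def using DIM_positive[where 'a='a] by linarith
  have vd: "0 < vd" unfolding vd_def using content_ball_pos[of 1 "0::'a"] by simp
  have np: "0 < n" using n_ge by simp
  have npr: "0 < real n" using np by simp
  have ln1: "1 \<le> ln (real n)" using ln_ge1[of n] n_ge by simp
  have rpos: "0 < r" unfolding r_def by (rule r_facts(1)[OF n_ge lam_pos vd d1])
  have rv: "lam * vd * (r / 2) ^ d = 16 * real d * ln (real n) / real n"
    unfolding r_def by (rule r_facts(2)[OF n_ge lam_pos vd d1])
  define \<eta> where "\<eta> = 1 / (4 * real d)"
  define rho' where "rho' = (r / 2) * (1 - 2 * \<eta>)"
  define snet where "snet = (r / 2) * \<eta>"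
  define T where "T = {c. ball c (r / 2) \<subseteq> S}"
  have eta: "0 < \<eta>" "\<eta> < 1" using d1 unfolding \<eta>_def by (auto simp: field_simps)
  have eta2: "1 - 2 * \<eta> = 1 - 1 / (2 * real d)" unfolding \<eta>_def by (simp add: field_simps)
  have Sb[measurable]: "S \<in> sets borel"
    unfolding S_def using upper_closed[OF nonneg dens_int dens_one cont] by (simp add: borel_closed)
  have volS: "lam * measure lborel S \<le> 1" "emeasure lborel S < \<infinity>"
    unfolding S_def using vol_upper[OF nonneg dens_int dens_one cont lam_pos] by auto
  have snet: "0 < snet" "snet / 2 \<le> r / 2" using rpos eta unfolding snet_def by (auto simp: field_simps)
  have snet_eq: "(snet / 2) ^ d * vd = (r / 2) ^ d * vd / (8 * real d) ^ d"
  proof -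
    have "snet / 2 = (r / 2) / (8 * real d)" unfolding snet_def \<eta>_def using d1 by (simp add: field_simps)
    then have "(snet / 2) ^ d = (r / 2) ^ d / (8 * real d) ^ d" by (simp only: power_divide)
    then show ?thesis by simp
  qed
  have cardB: "real (card F) \<le> real n * (8 * real d) ^ d / (16 * real d * ln (real n))"
    if F: "finite F" "F \<subseteq> T" "\<forall>x\<in>F. \<forall>y\<in>F. x \<noteq> y \<longrightarrow> snet \<le> dist x y" for F
  proof -
    have "real (card F) * ((snet / 2) ^ DIM('a) * measure lborel (ball (0::'a) 1)) \<le> measure lborel S"
      by (rule net_card[OF F(1) _ F(3) snet Sb volS(2)]) (use F(2) in \<open>auto simp: T_def\<close>)
    then have "real (card F) * ((r / 2) ^ d * vd / (8 * real d) ^ d) \<le> measure lborel S"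
      using snet_eq unfolding d_def vd_def by simp
    then have "lam * (real (card F) * ((r / 2) ^ d * vd / (8 * real d) ^ d)) \<le> 1"
      using volS(1) lam_pos by (smt (verit) mult_left_mono)
    moreover have "lam * (real (card F) * ((r / 2) ^ d * vd / (8 * real d) ^ d))
        = real (card F) * (lam * vd * (r / 2) ^ d) / (8 * real d) ^ d"
      by (simp add: field_simps)
    ultimately have "real (card F) * (16 * real d * ln (real n) / real n) / (8 * real d) ^ d \<le> 1"
      unfolding rv by simp
    moreover have "0 < 16 * real d * ln (real n) / real n" using d1 ln1 npr n_ge by (intro divide_pos_pos mult_pos_pos) auto
    moreover have "0 < (8 * real d) ^ d" using d1 by simp
    ultimately show ?thesis using npr by (simp add: field_simps)
  qed
  obtain F where F: "finite F" "F \<subseteq> T" "\<forall>x\<in>F. \<forall>y\<in>F. x \<noteq> y \<longrightarrow> snet \<le> dist x y"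
      "\<forall>c\<in>T. \<exists>c'\<in>F. dist c c' < snet"
  proof -
    have "\<exists>F. finite F \<and> F \<subseteq> T \<and> (\<forall>x\<in>F. \<forall>y\<in>F. x \<noteq> y \<longrightarrow> snet \<le> dist x y) \<and> (\<forall>c\<in>T. \<exists>c'\<in>F. dist c c' < snet)"
    proof (rule maximal_net[where B = "nat \<lceil>real n * (8 * real d) ^ d / (16 * real d * ln (real n))\<rceil>"])
      fix G assume G: "finite G" "G \<subseteq> T" "\<forall>x\<in>G. \<forall>y\<in>G. x \<noteq> y \<longrightarrow> snet \<le> dist x y"
      have "real (card G) \<le> real n * (8 * real d) ^ d / (16 * real d * ln (real n))" by (rule cardB[OF G])
      then show "card G \<le> nat \<lceil>real n * (8 * real d) ^ d / (16 * real d * ln (real n))\<rceil>"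
        by linarith
    qed (rule snet(1))
    then show ?thesis using that by blast
  qed
  have ballfail: "real (card F) * (1 / real n ^ (8 * d)) \<le> 1 / real n ^ 2"
  proof (cases "F = {}")
    case True then show ?thesis by simp
  next
    case False
    then obtain c where "c \<in> F" by blast
    then have cT: "ball c (r / 2) \<subseteq> S" using F(2) unfolding T_def by blast
    have "measure lborel (ball c (r / 2)) \<le> measure lborel S"
      by (rule measure_mono_fmeasurable[OF cT]) (use volS in \<open>auto simp: fmeasurable_def\<close>)
    moreover have "measure lborel (ball c (r / 2)) = (r / 2) ^ d * vd"
      unfolding d_def vd_def using rpos by (intro content_ball_conv_unit_ball) simp
    ultimately have "lam * ((r / 2) ^ d * vd) \<le> 1" using volS(1) lam_pos
      by (smt (verit) mult_left_mono)
    then have "16 * real d * ln (real n) / real n \<le> 1" using rv by (simp add: algebra_simps)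
    then have big: "16 * real d * ln (real n) \<le> real n" using npr by (simp add: field_simps)
    show ?thesis by (rule ball_num[OF n_ge d1 big cardB[OF F(1-3)]])
  qed
  define BadB where "BadB = (\<lambda>c. {X \<in> space PM. \<forall>i<n. X i \<notin> ball c rho'})"
  have BadB_sets: "BadB c \<in> sets PM" for c
    unfolding BadB_def PM_def by (rule none_meas) (simp add: setsM)
  have BadB_prob: "measure PM (BadB c) \<le> 1 / real n ^ (8 * d)" if c: "c \<in> F" for c
  proof -
    have cT: "ball c (r / 2) \<subseteq> S" using F(2) c unfolding T_def by blast
    have rho_le: "rho' \<le> r / 2" using eta rpos unfolding rho'_def by (simp add: mult_left_le)
    have rho_pos: "0 < rho'" using eta rpos d1 unfolding rho'_def \<eta>_def by (simp add: field_simps)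
    have sub: "ball c rho' \<subseteq> S" using cT rho_le by (meson order_trans subset_ball)
    have "ennreal lam * emeasure lborel (ball c rho') \<le> emeasure M (ball c rho')"
      unfolding M_def S_def by (rule dens_ge_vol[OF nonneg dens_int dens_one]) (use sub lam_pos in \<open>auto simp: S_def\<close>)
    moreover have "emeasure lborel (ball c rho') = ennreal (rho' ^ d * vd)"
    proof -
      have "emeasure lborel (ball c rho') = ennreal (measure lborel (ball c rho'))"
        using emeasure_lborel_ball_finite[of c rho'] by (simp add: emeasure_eq_ennreal_measure)
      also have "measure lborel (ball c rho') = rho' ^ d * vd"
        unfolding d_def vd_def using rho_pos by (intro content_ball_conv_unit_ball) simp
      finally show ?thesis .
    qed
    moreover have "ennreal lam * ennreal (rho' ^ d * vd) = ennreal (lam * (rho' ^ d * vd))"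
      using lam_pos vd rho_pos by (simp add: ennreal_mult)
    ultimately have "ennreal (lam * (rho' ^ d * vd)) \<le> ennreal (measure M (ball c rho'))"
      by (simp add: M.emeasure_eq_measure)
    then have mu_ge: "lam * (rho' ^ d * vd) \<le> measure M (ball c rho')"
      by (simp add: ennreal_le_iff measure_nonneg)
    have "rho' ^ d = (r / 2) ^ d * (1 - 1 / (2 * real d)) ^ d"
      unfolding rho'_def eta2 by (rule power_mult_distrib)
    also have "\<dots> \<ge> (r / 2) ^ d * (1 / 2)"
      using bern_half[OF d1] rpos by (intro mult_left_mono) auto
    finally have "lam * (rho' ^ d * vd) \<ge> lam * vd * (r / 2) ^ d / 2"
      using lam_pos vd by (simp add: field_simps mult_left_mono)
    then have mu: "8 * real d * ln (real n) / real n \<le> measure M (ball c rho')"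
      using mu_ge rv by simp
    define p where "p = measure M (ball c rho')"
    have p1: "p \<le> 1" unfolding p_def by simp
    have "measure PM (BadB c) = (1 - p) ^ n"
      unfolding BadB_def PM_def p_def by (rule prob_none[OF probM]) (simp add: setsM)
    also have "\<dots> \<le> exp (- p) ^ n"
      by (rule power_mono) (use p1 exp_ge_add_one_self[of "- p"] in auto)
    also have "\<dots> = exp (- (real n * p))" by (simp add: exp_of_nat_mult[symmetric])
    also have "\<dots> \<le> exp (- (real (8 * d) * ln (real n)))"
    proof -
      have "real n * (8 * real d * ln (real n) / real n) \<le> real n * p"
        using mu npr unfolding p_def by (intro mult_left_mono) auto
      then have "real (8 * d) * ln (real n) \<le> real n * p" using npr by simp
      then show ?thesis by simp
    qed
    also have "\<dots> = 1 / real n ^ (8 * d)" by (rule exp_neg_ln_pow[OF np])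
    finally show ?thesis .
  qed
  define s where "s = sqrt (ln (real n) / real n)"
  have lnn: "0 < ln (real n) / real n" using ln1 npr n_ge by (intro divide_pos_pos) auto
  have s_pos: "0 < s" unfolding s_def using lnn by simp
  have s2: "s\<^sup>2 = ln (real n) / real n" unfolding s_def using lnn by simp
  define N0 where "N0 = nat \<lceil>1 / s\<rceil>"
  define Aj where "Aj = (\<lambda>j::nat. {x. \<bar>f0 x - lam\<bar> \<le> real j * s / C})"
  define Ai where "Ai = {x. \<bar>f0 x - lam\<bar> < epsbar}"
  define cnt where "cnt = (\<lambda>A (X :: nat \<Rightarrow> 'a). real (card {i. i < n \<and> X i \<in> A}))"
  define Bad where "Bad = (\<lambda>A. {X \<in> space PM. real n * measure M A + real n * s \<le> cnt A X})"
  have Aj_sets[measurable]: "Aj j \<in> sets borel" for j unfolding Aj_def by measurable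
  have Ai_sets[measurable]: "Ai \<in> sets borel" unfolding Ai_def by measurable
  have Bad_sets: "Bad A \<in> sets PM" if "A \<in> sets borel" for A
  proof -
    have "cnt A \<in> borel_measurable PM"
      unfolding cnt_def PM_def by (rule count_meas) (use that setsM in simp)
    then show ?thesis unfolding Bad_def by measurable
  qed
  have Bad_prob: "measure PM (Bad A) \<le> 1 / real n ^ 2" if "A \<in> sets borel" for A
  proof -
    have "measure PM (Bad A) \<le> exp (- 2 * real n * s\<^sup>2)"
      unfolding Bad_def cnt_def PM_def
      by (rule hoeff_count[OF probM _ np]) (use that setsM s_pos in auto)
    also have "exp (- 2 * real n * s\<^sup>2) = exp (- (real 2 * ln (real n)))"
      using s2 npr by simp
    also have "\<dots> = 1 / real n ^ 2" by (rule exp_neg_ln_pow[OF np])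
    finally show ?thesis .
  qed
  define U where "U = (\<Union>j\<in>{1..N0}. Bad (Aj j)) \<union> Bad Ai \<union> (\<Union>c\<in>F. BadB c)"
  define E where "E = space PM - U"
  have U_sets: "U \<in> sets PM"
    unfolding U_def
  proof (intro sets.Un sets.finite_UN)
    show "finite {1..N0}" by simp
    show "finite F" by (rule F(1))
    show "Bad (Aj j) \<in> sets PM" for j by (rule Bad_sets) simp
    show "Bad Ai \<in> sets PM" by (rule Bad_sets) simp
    show "BadB c \<in> sets PM" for c by (rule BadB_sets)
  qed
  have N0: "real N0 \<le> real n - 1"
  proof -
    have sq: "sqrt (real n) * sqrt (real n) = real n" using npr by simp
    have "4 \<le> sqrt (real n)" using n_ge by (simp add: real_le_rsqrt)
    then have "4 * sqrt (real n) \<le> real n" using sq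
      by (metis mult_right_mono real_sqrt_ge_zero of_nat_0_le_iff)
    moreover have "1 / s \<le> sqrt (real n)"
    proof -
      have "1 / s = sqrt (real n / ln (real n))" unfolding s_def by (simp add: real_sqrt_divide)
      also have "\<dots> \<le> sqrt (real n)"
        using ln1 npr by (intro real_sqrt_le_mono) (simp add: divide_le_eq)
      finally show ?thesis .
    qed
    moreover have "0 \<le> sqrt (real n)" by simp
    ultimately have "1 / s \<le> real n - 2" using n_ge by linarith
    then have "\<lceil>1 / s\<rceil> \<le> \<lceil>real n - 2\<rceil>" by (rule ceiling_mono)
    moreover have "\<lceil>real n - 2\<rceil> = int n - 2" by simp
    ultimately have "\<lceil>1 / s\<rceil> \<le> int n - 2" by simp
    then have "int (nat \<lceil>1 / s\<rceil>) \<le> int n - 2" using n_ge by simp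
    then have "int (nat \<lceil>1 / s\<rceil>) \<le> int (n - 1)" using n_ge by linarith
    then have "nat \<lceil>1 / s\<rceil> \<le> n - 1" by (simp only: zle_int)
    then have "real (nat \<lceil>1 / s\<rceil>) \<le> real (n - 1)" by (simp only: of_nat_le_iff)
    then show ?thesis unfolding N0_def using n_ge by (simp add: of_nat_diff)
  qed
  have U_prob: "measure PM U \<le> real (n + 1) / real n ^ 2"
  proof -
    have "measure PM U \<le> measure PM ((\<Union>j\<in>{1..N0}. Bad (Aj j)) \<union> Bad Ai) + measure PM (\<Union>c\<in>F. BadB c)"
      unfolding U_def by (rule measure_Un_le) (use Bad_sets BadB_sets F(1) in auto)
    also have "\<dots> \<le> (measure PM (\<Union>j\<in>{1..N0}. Bad (Aj j)) + measure PM (Bad Ai)) + measure PM (\<Union>c\<in>F. BadB c)"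
      by (intro add_right_mono measure_Un_le) (use Bad_sets in auto)
    also have "\<dots> \<le> (real N0 * (1 / real n ^ 2) + 1 / real n ^ 2) + 1 / real n ^ 2"
    proof (intro add_mono)
      have "measure PM (\<Union>j\<in>{1..N0}. Bad (Aj j)) \<le> (\<Sum>j\<in>{1..N0}. measure PM (Bad (Aj j)))"
        by (rule measure_UNION_le) (use Bad_sets in auto)
      also have "\<dots> \<le> (\<Sum>j\<in>{1..N0}. 1 / real n ^ 2)" by (intro sum_mono Bad_prob) simp
      also have "\<dots> = real N0 * (1 / real n ^ 2)" by simp
      finally show "measure PM (\<Union>j\<in>{1..N0}. Bad (Aj j)) \<le> real N0 * (1 / real n ^ 2)" .
      show "measure PM (Bad Ai) \<le> 1 / real n ^ 2" by (rule Bad_prob) simp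
      have "measure PM (\<Union>c\<in>F. BadB c) \<le> (\<Sum>c\<in>F. measure PM (BadB c))"
        by (rule measure_UNION_le) (use BadB_sets F(1) in auto)
      also have "\<dots> \<le> (\<Sum>c\<in>F. 1 / real n ^ (8 * d))" by (intro sum_mono BadB_prob)
      also have "\<dots> = real (card F) * (1 / real n ^ (8 * d))" by simp
      also have "\<dots> \<le> 1 / real n ^ 2" by (rule ballfail)
      finally show "measure PM (\<Union>c\<in>F. BadB c) \<le> 1 / real n ^ 2" .
    qed
    also have "\<dots> = (real N0 + 2) / real n ^ 2" by (simp add: add_divide_distrib)
    also have "\<dots> \<le> real (n + 1) / real n ^ 2"
      using N0 npr by (intro divide_right_mono) auto
    finally show ?thesis .
  qed
  have E_sets: "E \<in> sets PM" unfolding E_def using U_sets by auto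
  have E_prob: "measure PM E \<ge> 1 - real (n + 1) / real n ^ 2"
  proof -
    have "measure PM E = 1 - measure PM U" unfolding E_def by (rule P.prob_compl[OF U_sets])
    then show ?thesis using U_prob by linarith
  qed
  have main: "binder_D n a m (psi_graph n X f lam \<delta>) (psi_level n X f0 lam)
             \<le> 8 * (C * \<epsilon> + sqrt (ln (real n) / real n))"
    if X: "X \<in> E" and ep: "0 < \<epsilon>" "\<epsilon> < epsbar / 2"
      and dl: "r \<le> \<delta>" "ereal \<delta> \<le> 2 * h_mod f0 \<epsilon>" and hf: "\<And>x. \<bar>f x - f0 x\<bar> \<le> \<epsilon>"
    for X \<epsilon> \<delta> f
  proof -
    have XU: "X \<in> space PM" "X \<notin> U" using X unfolding E_def by auto
    have hd: "\<bar>f0 x - f0 z\<bar> \<le> \<epsilon>" if xz: "norm (x - z) < \<delta> / 2" for x z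
    proof -
      define H where "H = {ereal h | h. h \<ge> 0 \<and> (\<forall>x y. norm (x - y) \<le> h \<longrightarrow> \<bar>f0 x - f0 y\<bar> \<le> \<epsilon>)}"
      have hm: "h_mod f0 \<epsilon> = Sup H" unfolding h_mod_def H_def by simp
      have "ereal (norm (x - z)) < Sup H"
      proof (cases "Sup H")
        case (real h)
        then have "\<delta> \<le> 2 * h" using dl(2) hm by simp
        then show ?thesis using xz real by simp
      next
        case PInf then show ?thesis by simp
      next
        case MInf then show ?thesis using dl(2) hm by simp
      qed
      then obtain y where "y \<in> H" "ereal (norm (x - z)) < y" by (auto simp: less_Sup_iff)
      then obtain h where h: "\<forall>x y. norm (x - y) \<le> h \<longrightarrow> \<bar>f0 x - f0 y\<bar> \<le> \<epsilon>" "norm (x - z) < h"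
        unfolding H_def by auto
      then show ?thesis by auto
    qed
    have cov: "\<exists>k<n. norm (X k - c) < (r / 2) * (1 - \<eta>)" if c: "ball c (r / 2) \<subseteq> upper_set f0 lam" for c
    proof -
      have "c \<in> T" using c unfolding T_def S_def by simp
      then obtain c' where c': "c' \<in> F" "dist c c' < snet" using F(4) by blast
      then have "X \<notin> BadB c'" using XU unfolding U_def by blast
      then obtain k where k: "k < n" "X k \<in> ball c' rho'" using XU unfolding BadB_def by blast
      have "norm (X k - c) \<le> dist c c' + dist c' (X k)"
        by (metis dist_commute dist_norm dist_triangle)
      also have "\<dots> < snet + rho'" using c' k by (intro add_strict_mono) auto
      also have "\<dots> = (r / 2) * (1 - \<eta>)" unfolding snet_def rho'_def by (simp add: algebra_simps)
      finally show ?thesis using k by blast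
    qed
    have "binder_D n a m (psi_graph n X f lam \<delta>) (psi_level n X f0 lam)
          \<le> 4 * real (card {i. i < n \<and> \<bar>f0 (X i) - lam\<bar> \<le> 2 * \<epsilon>}) / real n"
      by (rule det_bound[where r=r and \<eta>=\<eta>, OF stable ep(1) _ hd hf rpos dl(1) eta cov])
         (use ep a_pos a_le m_pos m_le n_ge in auto)
    also have "\<dots> \<le> 8 * (C * \<epsilon> + s)"
    proof -
      define K where "K = {i. i < n \<and> \<bar>f0 (X i) - lam\<bar> \<le> 2 * \<epsilon>}"
      have cnt_mono: "cnt A X \<le> cnt B X" if "A \<subseteq> B" for A B
        unfolding cnt_def using that by (intro of_nat_mono card_mono) auto
      have Kn: "real (card K) \<le> real n"
      proof -
        have "card K \<le> card {..<n}" by (rule card_mono) (auto simp: K_def)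
        then show ?thesis by simp
      qed
      have "real (card K) \<le> real n * (2 * C * \<epsilon> + 2 * s)"
      proof (cases "1 \<le> 2 * C * \<epsilon>")
        case True
        then have "real n \<le> real n * (2 * C * \<epsilon> + 2 * s)" using s_pos npr
          by (simp add: mult_le_cancel_left1)
        then show ?thesis using Kn by linarith
      next
        case False
        define j where "j = nat \<lceil>2 * C * \<epsilon> / s\<rceil>"
        have q: "0 < 2 * C * \<epsilon> / s" using C_pos ep s_pos by simp
        have j1: "1 \<le> j" unfolding j_def using q by linarith
        have jge: "2 * C * \<epsilon> / s \<le> real j" unfolding j_def by linarith
        have jlt: "real j < 2 * C * \<epsilon> / s + 1" unfolding j_def using q by linarith
        have "2 * C * \<epsilon> / s \<le> 1 / s" using False s_pos by (simp add: divide_right_mono)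
        then have "j \<le> N0" unfolding j_def N0_def by (meson ceiling_mono nat_mono)
        then have jN: "j \<in> {1..N0}" using j1 by simp
        define t where "t = real j * s / C"
        have tge: "2 * \<epsilon> \<le> t" using jge s_pos C_pos unfolding t_def by (simp add: field_simps)
        have tlt: "C * t < 2 * C * \<epsilon> + s" using jlt s_pos C_pos unfolding t_def by (simp add: field_simps)
        have tpos: "0 < t" using tge ep by linarith
        have K_Aj: "real (card K) \<le> cnt (Aj j) X"
          unfolding cnt_def K_def Aj_def using tge t_def by (intro of_nat_mono card_mono) (auto simp: t_def)
        have notBad: "X \<notin> Bad (Aj j)" using XU jN unfolding U_def by blast
        then have c1: "cnt (Aj j) X < real n * measure M (Aj j) + real n * s"
          using XU unfolding Bad_def by auto
        show ?thesis
        proof (cases "t < epsbar")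
          case True
          have "measure M (Aj j) = (LINT x : Aj j | lborel. f0 x)"
            unfolding M_def by (rule dens_measure[OF nonneg dens_int dens_one]) simp
          also have "\<dots> \<le> C * t" unfolding Aj_def t_def[symmetric] by (rule margin[OF tpos True])
          finally have "measure M (Aj j) \<le> C * t" .
          then have "real n * measure M (Aj j) \<le> real n * (C * t)" using npr by simp
          then show ?thesis using K_Aj c1 tlt npr
            by (smt (verit, best) distrib_left mult_less_cancel_left_pos)
        next
          case False
          have K_Ai: "real (card K) \<le> cnt Ai X"
            unfolding cnt_def K_def Ai_def using ep by (intro of_nat_mono card_mono) auto
          have notBadi: "X \<notin> Bad Ai" using XU unfolding U_def by blast
          then have c2: "cnt Ai X < real n * measure M Ai + real n * s"
            using XU unfolding Bad_def by auto
          have "measure M Ai \<le> C * epsbar"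
            unfolding M_def Ai_def
            using margin_open[OF nonneg dens_int dens_one epsbar_pos margin less_imp_le[OF C_pos]] .
          also have "\<dots> \<le> C * t" using False C_pos by simp
          finally have "real n * measure M Ai \<le> real n * (C * t)" using npr by simp
          then show ?thesis using K_Ai c2 tlt npr
            by (smt (verit, best) distrib_left mult_less_cancel_left_pos)
        qed
      qed
      then have "4 * real (card K) / real n \<le> 4 * (2 * C * \<epsilon> + 2 * s)"
        using npr by (simp add: field_simps)
      then show ?thesis unfolding K_def by simp
    qed
    finally show ?thesis unfolding s_def .
  qed
  show ?thesis
  proof (intro bexI[of _ E] conjI)
    show "E \<in> sets (PiM {..<n} (\<lambda>_. density lborel (\<lambda>x. ennreal (f0 x))))"
      using E_sets unfolding PM_def M_def .
    show "measure (PiM {..<n} (\<lambda>_. density lborel (\<lambda>x. ennreal (f0 x)))) E \<ge> 1 - real (n + 1) / real n ^ 2"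
      using E_prob unfolding PM_def M_def .
    show "\<forall>X \<in> E. \<forall>\<epsilon>. 0 < \<epsilon> \<and> \<epsilon> < epsbar / 2 \<longrightarrow>
        (\<forall>\<delta> (f :: 'a \<Rightarrow> real).
           r_rad n lam DIM('a) (measure lborel (ball (0::'a) 1)) \<le> \<delta> \<and> ereal \<delta> \<le> 2 * h_mod f0 \<epsilon> \<and>
           (\<forall>x. \<bar>f x - f0 x\<bar> \<le> \<epsilon>) \<longrightarrow>
           binder_D n a m (psi_graph n X f lam \<delta>) (psi_level n X f0 lam)
             \<le> 8 * (C * \<epsilon> + sqrt (ln (real n) / real n)))"
      using main unfolding r_def d_def vd_def by blast
  qed
qed

end
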